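(* There is an absolute constant $C$ such that for every $n$ and every $(\theta,m)$-LTF $f\colon\{0,1\}^n\to\{0,1\}$ with $\theta\ge2m>0$, $R^{lin}_{1/3}(f)\le C\frac{\theta}{m}\log\frac{\theta}{m}$ (in particular the bound does not depend on $n$).
   Context: $\mathrm{sgn}(y)=0$ for $y<0$ and $\mathrm{sgn}(y)=1$ for $y\ge0$. A $(\theta,m)$-LTF is a function $f(x)=\mathrm{sgn}(-\theta+\sum_{i=1}^n w_ix_i)$ on $\{0,1\}^n$ with real weights $w_i\ge0$ and real threshold $\theta$, whose margin $m>0$ satisfies $m\le\min_{x\in\{0,1\}^n}|-\theta+\sum_{i=1}^nw_ix_i|$. For $S\subseteq[n]$, $\chi_S(x)=\sum_{i\in S}x_i\pmod2$. Exact randomized $\mathbb F_2$-sketch complexity: for $f\colon\mathbb F_2^n\to\mathbb R$ and $\delta\in[0,1]$, $R^{lin}_\delta(f)$ is the smallest integer $k$ such that there exists a probability distribution over $k$-tuples of subsets $\mathbf S_1,\dots,\mathbf S_k\subseteq[n]$ and a function $g\colon\mathbb F_2^k\to\mathbb R$ with $\Pr_{\mathbf S_1,\dots,\mathbf S_k}[g(\chi_{\mathbf S_1}(x),\dots,\chi_{\mathbf S_k}(x))=f(x)]\ge1-\delta$ for every $x\in\mathbb F_2^n$. *)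

theory Defs
  imports "HOL-Probability.Probability"
begin

text \<open>Points of the cube {0,1}^n (= F_2^n) are functions nat => bool that vanish
  outside [n] = {0..<n}; true = 1, false = 0.\<close>
definition cube :: "nat \<Rightarrow> (nat \<Rightarrow> bool) set" where
  "cube n = {x. \<forall>i\<ge>n. \<not> x i}"

definition sgn01 :: "real \<Rightarrow> real" where
  "sgn01 y = (if y \<ge> 0 then 1 else 0)"

definition ltf_form :: "nat \<Rightarrow> (nat \<Rightarrow> real) \<Rightarrow> real \<Rightarrow> (nat \<Rightarrow> bool) \<Rightarrow> real" where
  "ltf_form n w \<theta> x = - \<theta> + (\<Sum>i<n. w i * (if x i then 1 else 0))"

definition is_LTF :: "nat \<Rightarrow> real \<Rightarrow> real \<Rightarrow> ((nat \<Rightarrow> bool) \<Rightarrow> real) \<Rightarrow> bool" where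
  "is_LTF n \<theta> m f \<longleftrightarrow>
     (\<exists>w. (\<forall>i<n. w i \<ge> 0) \<and> m > 0 \<and>
          (\<forall>x\<in>cube n. m \<le> \<bar>ltf_form n w \<theta> x\<bar>) \<and>
          (\<forall>x\<in>cube n. f x = sgn01 (ltf_form n w \<theta> x)))"

definition chi :: "nat set \<Rightarrow> (nat \<Rightarrow> bool) \<Rightarrow> bool" where
  "chi S x = odd (card {i\<in>S. x i})"

definition sketchable :: "nat \<Rightarrow> real \<Rightarrow> ((nat \<Rightarrow> bool) \<Rightarrow> real) \<Rightarrow> nat \<Rightarrow> bool" where
  "sketchable n \<delta> f k \<longleftrightarrow>
     (\<exists>(D :: nat set list pmf) (g :: bool list \<Rightarrow> real).
        (\<forall>Ss\<in>set_pmf D. length Ss = k \<and> (\<forall>S\<in>set Ss. S \<subseteq> {..<n})) \<and>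
        (\<forall>x\<in>cube n. measure_pmf.prob D {Ss. g (map (\<lambda>S. chi S x) Ss) = f x} \<ge> 1 - \<delta>))"

definition R_lin :: "nat \<Rightarrow> real \<Rightarrow> ((nat \<Rightarrow> bool) \<Rightarrow> real) \<Rightarrow> nat" where
  "R_lin n \<delta> f = (LEAST k. sketchable n \<delta> f k)"

end

theory Submission
  imports Defs
begin


definition xsum :: "(nat \<Rightarrow> nat set) \<Rightarrow> nat set \<Rightarrow> nat set" where
  "xsum col J = {l. odd (card {b\<in>J. l \<in> col b})}"

lemma odd_card_sdiff:
  assumes "finite X" "finite Y"
  shows "odd (card ((X - Y) \<union> (Y - X))) \<longleftrightarrow> (odd (card X) \<noteq> odd (card Y))"
proof -
  have d: "(X - Y) \<union> (Y - X) = (X \<union> Y) - (X \<inter> Y)" by blast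
  have "card ((X \<union> Y) - (X \<inter> Y)) = card (X \<union> Y) - card (X \<inter> Y)"
    using assms by (intro card_Diff_subset) auto
  moreover have "card X + card Y = card (X \<union> Y) + card (X \<inter> Y)"
    using assms card_Un_Int by blast
  moreover have "card (X \<inter> Y) \<le> card (X \<union> Y)" using assms by (intro card_mono) auto
  ultimately show ?thesis unfolding d by presburger
qed

lemma xsum_sdiff:
  assumes "finite A" "finite B"
  shows "xsum col ((A - B) \<union> (B - A)) = (xsum col A - xsum col B) \<union> (xsum col B - xsum col A)"
proof -
  have "\<And>l. {b\<in>(A - B) \<union> (B - A). l \<in> col b} =
     ({b\<in>A. l \<in> col b} - {b\<in>B. l \<in> col b}) \<union> ({b\<in>B. l \<in> col b} - {b\<in>A. l \<in> col b})" by blast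
  then show ?thesis unfolding xsum_def using assms
    by (auto simp: odd_card_sdiff)
qed

lemma xsum_cong: "(\<And>b. b \<in> J \<Longrightarrow> col b = col' b) \<Longrightarrow> xsum col J = xsum col' J"
  unfolding xsum_def by (metis (mono_tags, lifting) Collect_cong)

lemma xsum_insert:
  assumes "finite J" "b \<notin> J"
  shows "xsum col (insert b J) = (xsum col J - col b) \<union> (col b - xsum col J)"
proof -
  have "xsum col {b} = col b" unfolding xsum_def
  proof (intro set_eqI)
    fix l
    have "{b' \<in> {b}. l \<in> col b'} = (if l \<in> col b then {b} else {})" by auto
    then show "l \<in> {l. odd (card {b' \<in> {b}. l \<in> col b'})} \<longleftrightarrow> l \<in> col b"
      by auto
  qed
  moreover have "insert b J = (J - {b}) \<union> ({b} - J)" using assms by blast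
  ultimately show ?thesis using xsum_sdiff[of J "{b}" col] assms by simp
qed

lemma sum_pow_le: "(\<Sum>k\<le>d. (N::nat) ^ k) \<le> (N+1)^d"
proof (induction d)
  case 0 then show ?case by simp
next
  case (Suc d)
  have "(\<Sum>k\<le>Suc d. N ^ k) = 1 + N * (\<Sum>k\<le>d. N ^ k)"
    unfolding sum.atMost_Suc_shift by (simp add: sum_distrib_left)
  also have "\<dots> \<le> (\<Sum>k\<le>d. N ^ k) + N * (N+1)^d"
  proof -
    have "1 \<le> (\<Sum>k\<le>d. N ^ k)"
      using member_le_sum[of 0 "{..d}" "\<lambda>k. N^k"] by simp
    moreover have "N * (\<Sum>k\<le>d. N ^ k) \<le> N * (N+1)^d" using Suc by (rule mult_le_mono2)
    ultimately show ?thesis by linarith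
  qed
  also have "\<dots> \<le> (N+1)^d + N * (N+1)^d" using Suc by simp
  also have "\<dots> = (N+1)^Suc d" by (simp add: algebra_simps)
  finally show ?case .
qed

lemma card_small_subsets:
  "card {J. J \<subseteq> {..<(N::nat)} \<and> card J \<le> d} \<le> (N+1)^d"
proof -
  have eq: "{J. J \<subseteq> {..<N} \<and> card J \<le> d} = (\<Union>k\<le>d. {J. J \<subseteq> {..<N} \<and> card J = k})" by auto
  have "card {J. J \<subseteq> {..<N} \<and> card J \<le> d} \<le> (\<Sum>k\<le>d. card {J. J \<subseteq> {..<N} \<and> card J = k})"
    unfolding eq by (rule card_UN_le) simp
  also have "\<dots> = (\<Sum>k\<le>d. N choose k)" by (simp add: n_subsets)
  also have "\<dots> \<le> (\<Sum>k\<le>d. N ^ k)"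
  proof (rule sum_mono)
    fix k assume "k \<in> {..d}"
    show "N choose k \<le> N ^ k"
    proof (cases "k \<le> N")
      case True then show ?thesis by (rule binomial_le_pow)
    next
      case False then show ?thesis by (simp add: binomial_eq_0)
    qed
  qed
  also have "\<dots> \<le> (N+1)^d" by (rule sum_pow_le)
  finally show ?thesis .
qed

lemma code_exists:
  assumes "D \<ge> 1"
  shows "(N+1)^D < 2^r \<Longrightarrow> \<exists>col. (\<forall>b. col b \<subseteq> {..<r}) \<and>
     (\<forall>J. J \<subseteq> {..<N} \<and> J \<noteq> {} \<and> card J \<le> D \<longrightarrow> xsum col J \<noteq> {})"
proof (induction N)
  case 0 then show ?case by (intro exI[of _ "\<lambda>_. {}"]) auto
next
  case (Suc N)
  have "(N+1)^D \<le> (Suc N + 1)^D" by (simp add: power_mono)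
  with Suc.prems have "(N+1)^D < 2^r" by linarith
  with Suc.IH obtain col where col: "\<forall>b. col b \<subseteq> {..<r}"
    "\<forall>J. J \<subseteq> {..<N} \<and> J \<noteq> {} \<and> card J \<le> D \<longrightarrow> xsum col J \<noteq> {}" by blast
  define Bad where "Bad = xsum col ` {J. J \<subseteq> {..<N} \<and> card J \<le> D - 1}"
  have "card Bad \<le> card {J. J \<subseteq> {..<N} \<and> card J \<le> D - 1}"
    unfolding Bad_def by (rule card_image_le) (simp add: finite_subset[of _ "Pow {..<N}"])
  also have "\<dots> \<le> (N+1)^(D-1)" by (rule card_small_subsets)
  also have "\<dots> \<le> (N+1)^D" using assms by (intro power_increasing) auto
  also have "\<dots> < 2^r" by fact
  also have "\<dots> = card (Pow {..<r})" by (simp add: card_Pow)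
  finally have "card Bad < card (Pow {..<r})" .
  have "\<not> Pow {..<r} \<subseteq> Bad"
  proof
    assume "Pow {..<r} \<subseteq> Bad"
    moreover have "finite Bad" unfolding Bad_def by (rule finite_imageI) (simp add: finite_subset[of _ "Pow {..<N}"])
    ultimately have "card (Pow {..<r}) \<le> card Bad" by (rule card_mono[rotated])
    with \<open>card Bad < card (Pow {..<r})\<close> show False by simp
  qed
  then obtain v where v: "v \<subseteq> {..<r}" "v \<notin> Bad" by blast
  define col' where "col' = col(N := v)"
  show ?case
  proof (intro exI[of _ col'] conjI allI impI)
    fix b show "col' b \<subseteq> {..<r}" using col v by (simp add: col'_def)
  next
    fix J assume J: "J \<subseteq> {..<Suc N} \<and> J \<noteq> {} \<and> card J \<le> D"
    show "xsum col' J \<noteq> {}"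
    proof (cases "N \<in> J")
      case False
      then have "J \<subseteq> {..<N}" using J less_Suc_eq by auto
      moreover have "xsum col' J = xsum col J" by (rule xsum_cong) (use False in \<open>auto simp: col'_def\<close>)
      ultimately show ?thesis using col J by auto
    next
      case True
      define J0 where "J0 = J - {N}"
      have J0: "J0 \<subseteq> {..<N}" "finite J0" "N \<notin> J0" using J finite_subset[of J "{..<Suc N}"] by (auto simp: J0_def)
      have JJ: "J = insert N J0" using True by (auto simp: J0_def)
      have "card J = Suc (card J0)" using JJ J0 by simp
      then have cJ0: "card J0 \<le> D - 1" using J by linarith
      have "xsum col' J = (xsum col' J0 - v) \<union> (v - xsum col' J0)"
        unfolding JJ using J0 by (simp add: xsum_insert col'_def)
      moreover have "xsum col' J0 = xsum col J0" by (rule xsum_cong) (use J0 in \<open>auto simp: col'_def\<close>)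
      moreover have "xsum col J0 \<noteq> v" using v J0 cJ0 unfolding Bad_def by blast
      ultimately show ?thesis by auto
    qed
  qed
qed


lemma card_PiE_coord:
  assumes "finite I" "j \<in> I" "\<And>i. finite (F i)"
  shows "card {\<omega>\<in>PiE I F. P (\<omega> j) (restrict \<omega> (I-{j}))} =
         (\<Sum>g\<in>PiE (I-{j}) F. card {y\<in>F j. P y g})"
proof -
  let ?S = "Sigma (PiE (I-{j}) F) (\<lambda>g. {y\<in>F j. P y g})"
  have bij: "bij_betw (\<lambda>(g,y). g(j:=y)) ?S {\<omega>\<in>PiE I F. P (\<omega> j) (restrict \<omega> (I-{j}))}"
  proof (rule bij_betw_byWitness[where f' = "\<lambda>\<omega>. (restrict \<omega> (I-{j}), \<omega> j)"])
    show "\<forall>a\<in>?S. (\<lambda>\<omega>. (restrict \<omega> (I-{j}), \<omega> j)) ((\<lambda>(g,y). g(j:=y)) a) = a"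
    proof
      fix a assume "a \<in> ?S"
      then obtain g y where a: "a = (g,y)" "g \<in> PiE (I-{j}) F" by auto
      have "restrict (g(j:=y)) (I-{j}) = g"
        using a(2) by (auto simp: restrict_def PiE_def extensional_def fun_eq_iff)
      then show "(\<lambda>\<omega>. (restrict \<omega> (I-{j}), \<omega> j)) ((\<lambda>(g,y). g(j:=y)) a) = a" using a by simp
    qed
    show "\<forall>a'\<in>{\<omega>\<in>PiE I F. P (\<omega> j) (restrict \<omega> (I-{j}))}.
            (\<lambda>(g,y). g(j:=y)) ((\<lambda>\<omega>. (restrict \<omega> (I-{j}), \<omega> j)) a') = a'"
      using assms(2) by (auto simp: restrict_def PiE_def extensional_def fun_eq_iff)
    show "(\<lambda>(g,y). g(j:=y)) ` ?S \<subseteq> {\<omega>\<in>PiE I F. P (\<omega> j) (restrict \<omega> (I-{j}))}"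
    proof
      fix \<omega> assume "\<omega> \<in> (\<lambda>(g,y). g(j:=y)) ` ?S"
      then obtain g y where w: "\<omega> = g(j:=y)" "g \<in> PiE (I-{j}) F" "y \<in> F j" "P y g" by auto
      have "restrict (g(j:=y)) (I-{j}) = g"
        using w(2) by (auto simp: restrict_def PiE_def extensional_def fun_eq_iff)
      moreover have "g(j:=y) \<in> PiE I F" using w(2,3) assms(2)
        by (auto simp: PiE_def extensional_def Pi_def)
      ultimately show "\<omega> \<in> {\<omega>\<in>PiE I F. P (\<omega> j) (restrict \<omega> (I-{j}))}" using w by simp
    qed
    show "(\<lambda>\<omega>. (restrict \<omega> (I-{j}), \<omega> j)) ` {\<omega>\<in>PiE I F. P (\<omega> j) (restrict \<omega> (I-{j}))} \<subseteq> ?S"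
      using assms(2) by (auto simp: PiE_def extensional_def Pi_def)
  qed
  have "card ?S = (\<Sum>g\<in>PiE (I-{j}) F. card {y\<in>F j. P y g})"
    by (rule card_SigmaI) (use assms in \<open>auto simp: finite_PiE\<close>)
  with bij_betw_same_card[OF bij] show ?thesis by simp
qed

lemma card_PiE_split:
  assumes "finite I" "j \<in> I" "\<And>i. finite (F i)"
  shows "card (PiE I F) = card (PiE (I-{j}) F) * card (F j)"
  using card_PiE_coord[OF assms, where P="\<lambda>_ _. True"] by simp

lemma card_PiE_coord_le:
  assumes "finite I" "j \<in> I" "\<And>i. finite (F i)"
    and "\<And>g. g \<in> PiE (I-{j}) F \<Longrightarrow> card {y\<in>F j. P y g} * K \<le> card (F j)"
  shows "card {\<omega>\<in>PiE I F. P (\<omega> j) (restrict \<omega> (I-{j}))} * K \<le> card (PiE I F)"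
proof -
  have "card {\<omega>\<in>PiE I F. P (\<omega> j) (restrict \<omega> (I-{j}))} * K =
        (\<Sum>g\<in>PiE (I-{j}) F. card {y\<in>F j. P y g} * K)"
    using card_PiE_coord[OF assms(1-3), where P=P] by (simp add: sum_distrib_right)
  also have "\<dots> \<le> (\<Sum>g\<in>PiE (I-{j}) F. card (F j))" by (rule sum_mono) (rule assms(4))
  also have "\<dots> = card (PiE I F)" by (simp add: card_PiE_split[OF assms(1-3)])
  finally show ?thesis .
qed

definition FF :: "nat \<Rightarrow> nat \<Rightarrow> nat \<Rightarrow> (nat \<times> nat \<times> nat set) set" where
  "FF M B c = {..<M} \<times> {..<B} \<times> Pow {..<c}"

lemma finite_FF[simp]: "finite (FF M B c)" by (simp add: FF_def)

lemma card_FF: "card (FF M B c) = M * B * 2^c"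
  by (simp add: FF_def card_cartesian_product card_Pow)

lemma collision1:
  fixes i j n :: nat
  assumes "i < n" "j < n" "i \<noteq> j"
  shows "card {\<omega>\<in>PiE {..<n} (\<lambda>_. FF M B c). fst (\<omega> i) = fst (\<omega> j)} * M \<le> card (PiE {..<n} (\<lambda>_. FF M B c))"
proof -
  have eq: "{\<omega>\<in>PiE {..<n} (\<lambda>_. FF M B c). fst (\<omega> i) = fst (\<omega> j)} =
     {\<omega>\<in>PiE {..<n} (\<lambda>_. FF M B c). (\<lambda>y g. fst y = fst (g i)) (\<omega> j) (restrict \<omega> ({..<n}-{j}))}"
    using assms by (simp add: restrict_def eq_commute)
  show ?thesis unfolding eq
  proof (rule card_PiE_coord_le)
    fix g :: "nat \<Rightarrow> nat \<times> nat \<times> nat set"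
    have "{y\<in>FF M B c. fst y = fst (g i)} \<subseteq> {fst (g i)} \<times> {..<B} \<times> Pow {..<c}"
      by (auto simp: FF_def)
    then have "card {y\<in>FF M B c. fst y = fst (g i)} \<le> card ({fst (g i)} \<times> {..<B} \<times> Pow {..<c})"
      by (intro card_mono) auto
    also have "\<dots> = B * 2^c" by (simp add: card_cartesian_product card_Pow)
    finally have "card {y\<in>FF M B c. fst y = fst (g i)} * M \<le> B * 2^c * M" by simp
    then show "card {y\<in>FF M B c. fst y = fst (g i)} * M \<le> card (FF M B c)"
      unfolding card_FF by (simp add: ac_simps)
  next
    show "finite {..<n}" by simp
    show "j \<in> {..<n}" using assms by simp
  qed simp
qed

lemma collision2:
  fixes i j n :: nat
  assumes "i < n" "j < n" "i \<noteq> j"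
  shows "card {\<omega>\<in>PiE {..<n} (\<lambda>_. FF M B c). fst (snd (\<omega> i)) = fst (snd (\<omega> j))} * B \<le> card (PiE {..<n} (\<lambda>_. FF M B c))"
proof -
  have eq: "{\<omega>\<in>PiE {..<n} (\<lambda>_. FF M B c). fst (snd (\<omega> i)) = fst (snd (\<omega> j))} =
     {\<omega>\<in>PiE {..<n} (\<lambda>_. FF M B c). (\<lambda>y g. fst (snd y) = fst (snd (g i))) (\<omega> j) (restrict \<omega> ({..<n}-{j}))}"
    using assms by (simp add: restrict_def eq_commute)
  show ?thesis unfolding eq
  proof (rule card_PiE_coord_le)
    fix g :: "nat \<Rightarrow> nat \<times> nat \<times> nat set"
    have "{y\<in>FF M B c. fst (snd y) = fst (snd (g i))} \<subseteq> {..<M} \<times> {fst (snd (g i))} \<times> Pow {..<c}"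
      by (auto simp: FF_def)
    then have "card {y\<in>FF M B c. fst (snd y) = fst (snd (g i))} \<le> card ({..<M} \<times> {fst (snd (g i))} \<times> Pow {..<c})"
      by (intro card_mono) auto
    also have "\<dots> = M * 2^c" by (simp add: card_cartesian_product card_Pow)
    finally have "card {y\<in>FF M B c. fst (snd y) = fst (snd (g i))} * B \<le> M * 2^c * B" by simp
    then show "card {y\<in>FF M B c. fst (snd y) = fst (snd (g i))} * B \<le> card (FF M B c)"
      unfolding card_FF by (simp add: ac_simps)
  next
    show "finite {..<n}" by simp
    show "j \<in> {..<n}" using assms by simp
  qed simp
qed


lemma odd_card_toggle:
  assumes "finite P" "i0 \<in> P" "\<And>i. i \<in> P \<Longrightarrow> i \<noteq> i0 \<Longrightarrow> Q' i = Q i" "Q' i0 = (\<not> Q i0)"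
  shows "odd (card {i\<in>P. Q' i}) \<longleftrightarrow> \<not> odd (card {i\<in>P. Q i})"
proof -
  define A where "A = {i\<in>P - {i0}. Q i}"
  have fA: "finite A" "i0 \<notin> A" using assms(1) by (auto simp: A_def)
  have 1: "{i\<in>P. Q i} = (if Q i0 then insert i0 A else A)" using assms by (auto simp: A_def)
  have 2: "{i\<in>P. Q' i} = (if Q i0 then A else insert i0 A)" using assms by (auto simp: A_def)
  show ?thesis unfolding 1 2 using fA by auto
qed

lemma uncert_count:
  fixes P :: "nat set" and n j c M B :: nat
  assumes P: "P \<subseteq> {..<n}"
  defines "\<Omega> \<equiv> PiE {..<n} (\<lambda>_. FF M B c)"
  shows "card {\<omega>\<in>\<Omega>. (\<exists>i\<in>P. fst (snd (\<omega> i)) = j) \<and>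
            (\<forall>a<c. even (card {i\<in>P. fst (snd (\<omega> i)) = j \<and> a \<in> snd (snd (\<omega> i))}))} * 2^c \<le> card \<Omega>"
proof -
  have finP: "finite P" using P finite_subset by blast
  define occ where "occ \<omega> \<longleftrightarrow> (\<exists>i\<in>P. fst (snd (\<omega> i)) = j)" for \<omega> :: "nat \<Rightarrow> nat \<times> nat \<times> nat set"
  define pat where "pat \<omega> = {a\<in>{..<c}. odd (card {i\<in>P. fst (snd (\<omega> i)) = j \<and> a \<in> snd (snd (\<omega> i))})}"
    for \<omega> :: "nat \<Rightarrow> nat \<times> nat \<times> nat set"
  define Fib where "Fib V = {\<omega>\<in>\<Omega>. occ \<omega> \<and> pat \<omega> = V}" for V
  define i0 where "i0 \<omega> = Min {i\<in>P. fst (snd (\<omega> i)) = j}" for \<omega> :: "nat \<Rightarrow> nat \<times> nat \<times> nat set"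
  define flp where "flp U \<omega> = fun_upd \<omega> (i0 \<omega>) (fst (\<omega> (i0 \<omega>)), fst (snd (\<omega> (i0 \<omega>))),
      (snd (snd (\<omega> (i0 \<omega>))) - U) \<union> (U - snd (snd (\<omega> (i0 \<omega>)))))" for U \<omega>
  have finO: "finite \<Omega>" unfolding \<Omega>_def by (simp add: finite_PiE)
  have i0: "i0 \<omega> \<in> P" "fst (snd (\<omega> (i0 \<omega>))) = j" if "occ \<omega>" for \<omega>
  proof -
    have "{i\<in>P. fst (snd (\<omega> i)) = j} \<noteq> {}" "finite {i\<in>P. fst (snd (\<omega> i)) = j}"
      using that finP by (auto simp: occ_def)
    from Min_in[OF this(2,1)] show "i0 \<omega> \<in> P" "fst (snd (\<omega> (i0 \<omega>))) = j"
      unfolding i0_def by auto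
  qed
  have h2flp: "fst (snd (flp U \<omega> i)) = fst (snd (\<omega> i))" for U \<omega> i
    by (simp add: flp_def)
  have occflip: "occ (flp U \<omega>) = occ \<omega>" for U \<omega> by (simp add: occ_def h2flp)
  have i0flip: "i0 (flp U \<omega>) = i0 \<omega>" for U \<omega> by (simp add: i0_def h2flp)
  have flipflip: "flp U (flp U \<omega>) = \<omega>" for U \<omega>
  proof -
    have sd: "(((X - U) \<union> (U - X)) - U) \<union> (U - ((X - U) \<union> (U - X))) = X" for X :: "nat set" by blast
    show ?thesis by (simp add: flp_def i0flip[unfolded flp_def] fun_eq_iff sd)
  qed
  have flipO: "flp U \<omega> \<in> \<Omega>" if "\<omega> \<in> \<Omega>" "occ \<omega>" "U \<subseteq> {..<c}" for U \<omega>
  proof -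
    have "i0 \<omega> < n" using i0(1)[OF that(2)] P by auto
    moreover have "\<omega> (i0 \<omega>) \<in> FF M B c" using that(1) \<open>i0 \<omega> < n\<close> by (auto simp: \<Omega>_def PiE_def Pi_def)
    moreover have "(fst (\<omega> (i0 \<omega>)), fst (snd (\<omega> (i0 \<omega>))),
      (snd (snd (\<omega> (i0 \<omega>))) - U) \<union> (U - snd (snd (\<omega> (i0 \<omega>))))) \<in> FF M B c"
      using calculation(2) that(3) unfolding FF_def by (cases "\<omega> (i0 \<omega>)") auto
    ultimately have "fun_upd \<omega> (i0 \<omega>) (fst (\<omega> (i0 \<omega>)), fst (snd (\<omega> (i0 \<omega>))),
      (snd (snd (\<omega> (i0 \<omega>))) - U) \<union> (U - snd (snd (\<omega> (i0 \<omega>))))) \<in> PiE (insert (i0 \<omega>) {..<n}) (\<lambda>_. FF M B c)"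
      using that(1) unfolding \<Omega>_def by (intro PiE_fun_upd) auto
    then show ?thesis unfolding flp_def \<Omega>_def using \<open>i0 \<omega> < n\<close> by (simp add: insert_absorb)
  qed
  have patflip: "pat (flp U \<omega>) = (pat \<omega> - U) \<union> (U - pat \<omega>)" if "occ \<omega>" "U \<subseteq> {..<c}" for U \<omega>
  proof (rule set_eqI)
    fix a
    show "a \<in> pat (flp U \<omega>) \<longleftrightarrow> a \<in> (pat \<omega> - U) \<union> (U - pat \<omega>)"
    proof (cases "a \<in> U")
      case True
      then have ac: "a < c" using that by auto
      have "odd (card {i\<in>P. fst (snd (flp U \<omega> i)) = j \<and> a \<in> snd (snd (flp U \<omega> i))}) \<longleftrightarrow>
            \<not> odd (card {i\<in>P. fst (snd (\<omega> i)) = j \<and> a \<in> snd (snd (\<omega> i))})"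
        by (rule odd_card_toggle[OF finP i0(1)[OF that(1)]])
           (use True i0(2)[OF that(1)] in \<open>auto simp: flp_def\<close>)
      then show ?thesis using True ac by (auto simp: pat_def)
    next
      case False
      have "{i\<in>P. fst (snd (flp U \<omega> i)) = j \<and> a \<in> snd (snd (flp U \<omega> i))} =
            {i\<in>P. fst (snd (\<omega> i)) = j \<and> a \<in> snd (snd (\<omega> i))}"
        using False by (auto simp: flp_def)
      then show ?thesis using False by (auto simp: pat_def)
    qed
  qed
  have le: "card (Fib V) \<le> card (Fib ((V - U) \<union> (U - V)))" if "U \<subseteq> {..<c}" for U V
  proof (rule card_inj_on_le)
    show "inj_on (flp U) (Fib V)"
    proof (rule inj_onI)
      fix x y assume "flp U x = flp U y"
      then have "flp U (flp U x) = flp U (flp U y)" by simp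
      then show "x = y" by (simp only: flipflip)
    qed
    show "flp U ` Fib V \<subseteq> Fib ((V - U) \<union> (U - V))"
    proof (rule image_subsetI)
      fix \<omega> assume w: "\<omega> \<in> Fib V"
      then have w': "\<omega> \<in> \<Omega>" "occ \<omega>" "pat \<omega> = V" unfolding Fib_def by auto
      show "flp U \<omega> \<in> Fib ((V - U) \<union> (U - V))"
        unfolding Fib_def using flipO[OF w'(1,2) that] occflip[of U \<omega>] patflip[OF w'(2) that] w'(2,3)
        by simp
    qed
    show "finite (Fib ((V - U) \<union> (U - V)))" using finO by (simp add: Fib_def)
  qed
  have eqW: "card (Fib W) = card (Fib {})" if "W \<subseteq> {..<c}" for W
  proof -
    have "card (Fib {}) \<le> card (Fib W)" using le[OF that, of "{}"] by simp
    moreover have "card (Fib W) \<le> card (Fib {})" using le[OF that, of W] by simp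
    ultimately show ?thesis by simp
  qed
  have U: "{\<omega>\<in>\<Omega>. occ \<omega>} = (\<Union>W\<in>Pow {..<c}. Fib W)"
  proof
    show "{\<omega>\<in>\<Omega>. occ \<omega>} \<subseteq> (\<Union>W\<in>Pow {..<c}. Fib W)"
    proof
      fix \<omega> assume "\<omega> \<in> {\<omega>\<in>\<Omega>. occ \<omega>}"
      moreover have "pat \<omega> \<in> Pow {..<c}" unfolding pat_def by blast
      ultimately show "\<omega> \<in> (\<Union>W\<in>Pow {..<c}. Fib W)" unfolding Fib_def by blast
    qed
    show "(\<Union>W\<in>Pow {..<c}. Fib W) \<subseteq> {\<omega>\<in>\<Omega>. occ \<omega>}" unfolding Fib_def by blast
  qed
  have "card {\<omega>\<in>\<Omega>. occ \<omega>} = (\<Sum>W\<in>Pow {..<c}. card (Fib W))"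
    unfolding U
  proof (rule card_UN_disjoint)
    show "finite (Pow {..<c})" by simp
    show "\<forall>i\<in>Pow {..<c}. finite (Fib i)" using finO unfolding Fib_def by simp
    show "\<forall>i\<in>Pow {..<c}. \<forall>j\<in>Pow {..<c}. i \<noteq> j \<longrightarrow> Fib i \<inter> Fib j = {}"
      unfolding Fib_def by blast
  qed
  also have "\<dots> = (\<Sum>W\<in>Pow {..<c}. card (Fib {}))"
    by (rule sum.cong[OF refl]) (rule eqW, simp)
  also have "\<dots> = card (Fib {}) * 2^c" by (simp add: card_Pow)
  finally have e1: "card {\<omega>\<in>\<Omega>. occ \<omega>} = card (Fib {}) * 2^c" .
  have "card {\<omega>\<in>\<Omega>. occ \<omega>} \<le> card \<Omega>" by (rule card_mono[OF finO]) blast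
  with e1 have fin: "card (Fib {}) * 2^c \<le> card \<Omega>" by simp
  have pe: "pat \<omega> = {} \<longleftrightarrow> (\<forall>a<c. even (card {i\<in>P. fst (snd (\<omega> i)) = j \<and> a \<in> snd (snd (\<omega> i))}))" for \<omega>
    unfolding pat_def by auto
  have "Fib {} = {\<omega>\<in>\<Omega>. (\<exists>i\<in>P. fst (snd (\<omega> i)) = j) \<and>
            (\<forall>a<c. even (card {i\<in>P. fst (snd (\<omega> i)) = j \<and> a \<in> snd (snd (\<omega> i))}))}"
    unfolding Fib_def occ_def pe by (rule refl)
  with fin show ?thesis by simp
qed


lemma parity_regroup:
  assumes "finite P"
  shows "odd (card {i\<in>P. Qp (\<beta> i)}) \<longleftrightarrow> odd (card {b. Qp b \<and> odd (card {i\<in>P. \<beta> i = b})})"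
  using assms
proof (induction P rule: finite_induct)
  case empty then show ?case by simp
next
  case (insert x F)
  let ?G = "\<lambda>P. {b. Qp b \<and> odd (card {i\<in>P. \<beta> i = b})}"
  have "?G F \<subseteq> \<beta> ` F"
  proof
    fix b assume "b \<in> ?G F"
    then have "{i\<in>F. \<beta> i = b} \<noteq> {}" by (metis (mono_tags, lifting) card.empty even_zero mem_Collect_eq)
    then show "b \<in> \<beta> ` F" by auto
  qed
  then have finG: "finite (?G F)" using insert.hyps(1) finite_subset by blast
  have c1: "card {i\<in>insert x F. \<beta> i = b} = (if \<beta> x = b then Suc (card {i\<in>F. \<beta> i = b}) else card {i\<in>F. \<beta> i = b})" for b
  proof -
    have "{i\<in>insert x F. \<beta> i = b} = (if \<beta> x = b then insert x {i\<in>F. \<beta> i = b} else {i\<in>F. \<beta> i = b})" by auto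
    then show ?thesis using insert.hyps by auto
  qed
  have G: "?G (insert x F) = (if Qp (\<beta> x) then (?G F - {\<beta> x}) \<union> ({\<beta> x} - ?G F) else ?G F)"
    by (simp only: c1) (auto split: if_splits)
  have L: "{i\<in>insert x F. Qp (\<beta> i)} = (if Qp (\<beta> x) then insert x {i\<in>F. Qp (\<beta> i)} else {i\<in>F. Qp (\<beta> i)})"
    by auto
  show ?case
  proof (cases "Qp (\<beta> x)")
    case True
    have "odd (card (?G (insert x F))) \<longleftrightarrow> (odd (card (?G F)) \<noteq> odd (card {\<beta> x}))"
      unfolding G using True finG by (simp add: odd_card_sdiff)
    then show ?thesis unfolding L using True insert by simp
  next
    case False
    then show ?thesis unfolding L G using insert by simp
  qed
qed

lemma card_image_pairs:
  fixes T :: "nat set"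
  assumes "finite T"
  shows "card T \<le> card (f ` T) + card {(i,k). i\<in>T \<and> k\<in>T \<and> i<k \<and> f i = f k}"
proof -
  define rep where "rep v = Min {i\<in>T. f i = v}" for v
  define Rs where "Rs = rep ` f ` T"
  have rep: "rep (f i) \<in> T" "f (rep (f i)) = f i" "rep (f i) \<le> i" if "i \<in> T" for i
  proof -
    have ne: "{i'\<in>T. f i' = f i} \<noteq> {}" "finite {i'\<in>T. f i' = f i}" using that assms by auto
    from Min_in[OF ne(2,1)] show "rep (f i) \<in> T" "f (rep (f i)) = f i" unfolding rep_def by auto
    show "rep (f i) \<le> i" unfolding rep_def using ne that by (intro Min_le) auto
  qed
  have RsT: "Rs \<subseteq> T" unfolding Rs_def using rep by auto
  have "card Rs \<le> card (f ` T)" unfolding Rs_def by (rule card_image_le) (simp add: assms)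
  have "card (T - Rs) \<le> card {(i,k). i\<in>T \<and> k\<in>T \<and> i<k \<and> f i = f k}"
  proof (rule card_inj_on_le[where f = "\<lambda>i. (rep (f i), i)"])
    show "inj_on (\<lambda>i. (rep (f i), i)) (T - Rs)" by (auto intro: inj_onI)
    show "(\<lambda>i. (rep (f i), i)) ` (T - Rs) \<subseteq> {(i,k). i\<in>T \<and> k\<in>T \<and> i<k \<and> f i = f k}"
    proof (rule image_subsetI)
      fix i assume i: "i \<in> T - Rs"
      then have "rep (f i) \<noteq> i" unfolding Rs_def by (metis DiffE imageI)
      with rep[of i] i show "(rep (f i), i) \<in> {(i,k). i\<in>T \<and> k\<in>T \<and> i<k \<and> f i = f k}" by auto
    qed
    show "finite {(i,k). i\<in>T \<and> k\<in>T \<and> i<k \<and> f i = f k}"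
      by (rule finite_subset[of _ "T \<times> T"]) (auto simp: assms)
  qed
  moreover have "card T = card Rs + card (T - Rs)"
    using RsT assms by (metis card_Diff_subset finite_subset le_add_diff_inverse card_mono)
  ultimately show ?thesis using \<open>card Rs \<le> card (f ` T)\<close> by linarith
qed

lemma card_pairs:
  fixes T :: "nat set"
  assumes "finite T"
  shows "2 * card {(i,k). i\<in>T \<and> k\<in>T \<and> i<k \<and> C i k} \<le> card T * card T"
proof -
  define A where "A = {(i,k). i\<in>T \<and> k\<in>T \<and> i<k \<and> C i k}"
  define A' where "A' = (\<lambda>(i,k). (k,i)) ` A"
  have finA: "finite A" unfolding A_def by (rule finite_subset[of _ "T \<times> T"]) (auto simp: assms)
  have "card A' = card A" unfolding A'_def by (rule card_image) (auto simp: inj_on_def)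
  moreover have "A \<inter> A' = {}" unfolding A_def A'_def by auto
  moreover have "A \<union> A' \<subseteq> T \<times> T" unfolding A_def A'_def by auto
  ultimately have "card A + card A' \<le> card (T \<times> T)"
    using finA by (metis card_Un_disjoint card_mono finite_cartesian_product assms finite_imageI A'_def)
  then show ?thesis unfolding A_def[symmetric] using \<open>card A' = card A\<close> by (simp add: card_cartesian_product)
qed

lemma markov_count:
  assumes "finite \<Omega>" "finite Ps"
  shows "card {\<omega>\<in>\<Omega>. a \<le> card {p\<in>Ps. C p \<omega>}} * a \<le> (\<Sum>p\<in>Ps. card {\<omega>\<in>\<Omega>. C p \<omega>})"
proof -
  have "card {\<omega>\<in>\<Omega>. a \<le> card {p\<in>Ps. C p \<omega>}} * a = (\<Sum>\<omega>\<in>{\<omega>\<in>\<Omega>. a \<le> card {p\<in>Ps. C p \<omega>}}. a)" by simp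
  also have "\<dots> \<le> (\<Sum>\<omega>\<in>{\<omega>\<in>\<Omega>. a \<le> card {p\<in>Ps. C p \<omega>}}. card {p\<in>Ps. C p \<omega>})" by (rule sum_mono) simp
  also have "\<dots> \<le> (\<Sum>\<omega>\<in>\<Omega>. card {p\<in>Ps. C p \<omega>})" by (rule sum_mono2) (use assms in auto)
  also have "\<dots> = (\<Sum>\<omega>\<in>\<Omega>. \<Sum>p\<in>Ps. if C p \<omega> then 1 else 0)"
    using assms by (intro sum.cong refl) (simp add: sum.inter_filter[symmetric])
  also have "\<dots> = (\<Sum>p\<in>Ps. \<Sum>\<omega>\<in>\<Omega>. if C p \<omega> then 1 else 0)" by (rule sum.swap)
  also have "\<dots> = (\<Sum>p\<in>Ps. card {\<omega>\<in>\<Omega>. C p \<omega>})"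
    using assms by (intro sum.cong refl) (simp add: sum.inter_filter[symmetric])
  finally show ?thesis .
qed

lemma union_count:
  assumes "finite \<Omega>" "finite Ps"
  shows "card {\<omega>\<in>\<Omega>. \<exists>p\<in>Ps. C p \<omega>} \<le> (\<Sum>p\<in>Ps. card {\<omega>\<in>\<Omega>. C p \<omega>})"
proof -
  have "{\<omega>\<in>\<Omega>. \<exists>p\<in>Ps. C p \<omega>} = (\<Union>p\<in>Ps. {\<omega>\<in>\<Omega>. C p \<omega>})" by auto
  then show ?thesis using card_UN_le[OF assms(2), of "\<lambda>p. {\<omega>\<in>\<Omega>. C p \<omega>}"] by simp
qed


definition sumw :: "nat \<Rightarrow> (nat \<Rightarrow> real) \<Rightarrow> (nat \<Rightarrow> bool) \<Rightarrow> real" where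
  "sumw n w x = (\<Sum>i<n. w i * (if x i then 1 else 0))"

lemma ltf_form_sumw: "ltf_form n w \<theta> x = sumw n w x - \<theta>"
  by (simp add: ltf_form_def sumw_def)

lemma sumw_upd:
  assumes "j < n"
  shows "sumw n w (z(j := False)) = sumw n w z - w j * (if z j then 1 else 0)"
proof -
  have "sumw n w z = w j * (if z j then 1 else 0) + (\<Sum>i\<in>{..<n}-{j}. w i * (if z i then 1 else 0))"
    unfolding sumw_def using assms by (simp add: sum.remove)
  moreover have "sumw n w (z(j := False)) = 0 + (\<Sum>i\<in>{..<n}-{j}. w i * (if z i then 1 else 0))"
    unfolding sumw_def using assms by (simp add: sum.remove)
  ultimately show ?thesis by simp
qed

lemma sumw_filter: "sumw n w x = sum w {i\<in>{..<n}. x i}"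
  unfolding sumw_def by (simp add: sum.inter_filter[symmetric] if_distrib cong: if_cong)

lemma relevance:
  assumes wpos: "\<forall>i<n. 0 \<le> w i" and marg: "\<forall>x\<in>cube n. m \<le> \<bar>sumw n w x - \<theta>\<bar>"
    and y: "y \<in> cube n"
  shows "(sumw n w y \<ge> \<theta>) \<longleftrightarrow> (sumw n w (\<lambda>i. y i \<and> 2*m \<le> w i) \<ge> \<theta>)"
proof -
  define irr where "irr = {i\<in>{..<n}. w i < 2*m}"
  have main: "J \<subseteq> irr \<Longrightarrow> (sumw n w y \<ge> \<theta>) \<longleftrightarrow> (sumw n w (\<lambda>i. y i \<and> i \<notin> J) \<ge> \<theta>)" if "finite J" for J
    using that
  proof (induction J rule: finite_induct)
    case empty then show ?case by simp
  next
    case (insert j J)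
    let ?z = "\<lambda>i. y i \<and> i \<notin> J"
    have j: "j < n" "w j < 2*m" "0 \<le> w j" using insert.prems wpos by (auto simp: irr_def)
    have eq: "(\<lambda>i. y i \<and> i \<notin> insert j J) = ?z(j := False)" by (auto simp: fun_eq_iff)
    have cz: "?z \<in> cube n" "?z(j := False) \<in> cube n" using y by (auto simp: cube_def)
    have d: "sumw n w (?z(j := False)) = sumw n w ?z - w j * (if ?z j then 1 else 0)"
      by (rule sumw_upd[OF j(1)])
    have m1: "m \<le> \<bar>sumw n w ?z - \<theta>\<bar>" "m \<le> \<bar>sumw n w (?z(j := False)) - \<theta>\<bar>"
      using marg cz by auto
    have "(sumw n w ?z \<ge> \<theta>) \<longleftrightarrow> (sumw n w (?z(j := False)) \<ge> \<theta>)"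
    proof (cases "?z j")
      case True
      then have d': "sumw n w (?z(j := False)) = sumw n w ?z - w j" using d by simp
      show ?thesis using m1 d' j by (auto simp: abs_if split: if_splits)
    next
      case False
      then have "sumw n w (?z(j := False)) = sumw n w ?z" using d by (simp only: if_False)
      then show ?thesis by simp
    qed
    then show ?case using insert eq by simp
  qed
  have "(\<lambda>i. y i \<and> i \<notin> irr) = (\<lambda>i. y i \<and> 2*m \<le> w i)"
    using y by (auto simp: irr_def cube_def fun_eq_iff)
  with main[of irr] show ?thesis by (simp add: irr_def)
qed


locale sk_setup =
  fixes n :: nat and \<theta> m :: real and w :: "nat \<Rightarrow> real" and e :: nat
  assumes wpos: "\<forall>i<n. 0 \<le> w i" and mpos: "0 < m"
    and marg: "\<forall>x\<in>cube n. m \<le> \<bar>sumw n w x - \<theta>\<bar>" and th: "2*m \<le> \<theta>"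
    and Ke: "nat \<lceil>\<theta>/(2*m)\<rceil> \<le> 2^e"
begin

definition "K1 = nat \<lceil>\<theta>/(2*m)\<rceil>"
definition "Q = 2*K1"
definition "M = 6*K1^2"
definition "Bb = 12*K1"
definition "c = e+7"
definition "\<delta> = m / real Q"
definition "Ncls = nat \<lfloor>\<theta>/\<delta>\<rfloor> + 1"
definition "N = (Ncls+1)*M"
definition "D = 3*K1"
definition "r = D*(4*e+7)"

lemma K1_ge1: "1 \<le> K1"
proof -
  have "1 \<le> \<theta>/(2*m)" using th mpos by simp
  then show ?thesis unfolding K1_def by linarith
qed

lemma K1_ge: "\<theta>/(2*m) \<le> real K1"
  unfolding K1_def by linarith

lemma Q_pos: "0 < Q" using K1_ge1 by (simp add: Q_def)

lemma delta_pos: "0 < \<delta>" using mpos Q_pos by (simp add: \<delta>_def)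

lemma theta_delta: "\<theta>/\<delta> \<le> 4 * real K1 ^ 2"
proof -
  have "\<theta>/\<delta> = (\<theta>/m) * real Q" using mpos Q_pos by (simp add: \<delta>_def field_simps)
  also have "\<theta>/m \<le> 2 * real K1" using K1_ge mpos by (simp add: field_simps)
  then have "(\<theta>/m) * real Q \<le> 2 * real K1 * real Q" by (intro mult_right_mono) auto
  also have "\<dots> = 4 * real K1 ^ 2" by (simp add: Q_def power2_eq_square)
  finally show ?thesis .
qed

lemma Ncls_le: "Ncls \<le> 4 * K1^2 + 1"
proof -
  have "\<lfloor>\<theta>/\<delta>\<rfloor> \<le> 4 * int K1 ^ 2" using theta_delta by (simp add: floor_le_iff)
  then show ?thesis unfolding Ncls_def by (simp add: nat_le_iff)
qed

lemma N_bound: "N + 1 < 2^(4*e+7)"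
proof -
  have "1 \<le> K1^2" using K1_ge1 by simp
  then have "Ncls + 1 \<le> 6 * K1^2" using Ncls_le by linarith
  then have "N \<le> 6*K1^2 * (6*K1^2)" unfolding N_def M_def by (rule mult_le_mono1)
  also have "\<dots> = 36 * K1^4" by (simp add: power_mult_distrib algebra_simps flip: power_add)
  finally have N36: "N \<le> 36 * K1^4" .
  have "1 \<le> K1^4" using K1_ge1 by simp
  with N36 have "N + 1 \<le> 37 * K1^4" by linarith
  also have "\<dots> \<le> 37 * (2^e)^4" using Ke by (simp add: K1_def power_mono)
  also have "\<dots> < 64 * (2^e)^4" by simp
  also have "\<dots> \<le> 2^(4*e+7)" by (simp add: power_add power_mult[symmetric] mult.commute)
  finally show ?thesis .
qed

definition "rel i \<longleftrightarrow> 2*m \<le> w i"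
definition "cls i = (if \<theta> \<le> w i then Ncls else nat \<lfloor>w i/\<delta>\<rfloor>)"
definition "lb k = (if k = Ncls then \<theta> else real k * \<delta>)"
definition "\<Omega> = PiE {..<n} (\<lambda>_. FF M Bb c)"
definition "col = (SOME col. (\<forall>b. col b \<subseteq> {..<r}) \<and>
     (\<forall>J. J \<subseteq> {..<N} \<and> J \<noteq> {} \<and> card J \<le> D \<longrightarrow> xsum col J \<noteq> {}))"
definition "bucket \<omega> i = cls i * M + fst (\<omega> i)"
definition "lowsum Z = (\<Sum>b\<in>Z. lb (b div M))"
definition "skA \<omega> = map (\<lambda>l. {i\<in>{..<n}. rel i \<and> l \<in> col (bucket \<omega> i)}) [0..<r]"
definition "skB \<omega> = map (\<lambda>k. {i\<in>{..<n}. rel i \<and> fst (snd (\<omega> i)) = k div c \<and> k mod c \<in> snd (snd (\<omega> i))}) [0..<Bb*c]"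
definition "sk \<omega> = skA \<omega> @ skB \<omega>"
definition "certA sA \<longleftrightarrow> \<not>(\<exists>Z. Z \<subseteq> {..<N} \<and> card Z \<le> K1 \<and> lowsum Z < \<theta> \<and> sA = map (\<lambda>l. l \<in> xsum col Z) [0..<r])"
definition "certB sB \<longleftrightarrow> K1 \<le> card {j\<in>{..<Bb}. \<exists>a<c. sB ! (j*c+a)}"
definition "g bs = (if certA (take r bs) \<or> certB (drop r bs) then 1 else 0::real)"

lemma col_prop: "\<forall>b. col b \<subseteq> {..<r}"
  "\<And>J. J \<subseteq> {..<N} \<Longrightarrow> J \<noteq> {} \<Longrightarrow> card J \<le> D \<Longrightarrow> xsum col J \<noteq> {}"
proof -
  have D1: "1 \<le> D" using K1_ge1 by (simp add: D_def)
  have "(N+1)^D < (2^(4*e+7))^D" by (rule power_strict_mono[OF N_bound]) (use D1 in auto)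
  also have "\<dots> = 2^r" by (simp add: r_def power_mult[symmetric] mult.commute)
  finally have "\<exists>col. (\<forall>b. col b \<subseteq> {..<r}) \<and>
     (\<forall>J. J \<subseteq> {..<N} \<and> J \<noteq> {} \<and> card J \<le> D \<longrightarrow> xsum col J \<noteq> {})"
    by (rule code_exists[OF D1])
  from someI_ex[OF this] have "(\<forall>b. col b \<subseteq> {..<r}) \<and>
     (\<forall>J. J \<subseteq> {..<N} \<and> J \<noteq> {} \<and> card J \<le> D \<longrightarrow> xsum col J \<noteq> {})"
    unfolding col_def .
  then show "\<forall>b. col b \<subseteq> {..<r}"
    "\<And>J. J \<subseteq> {..<N} \<Longrightarrow> J \<noteq> {} \<Longrightarrow> card J \<le> D \<Longrightarrow> xsum col J \<noteq> {}" by auto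
qed

lemma xsum_sub: "xsum col J \<subseteq> {..<r}"
proof
  fix l assume l: "l \<in> xsum col J"
  show "l \<in> {..<r}"
  proof (rule ccontr)
    assume "l \<notin> {..<r}"
    then have "{b\<in>J. l \<in> col b} = {}" using col_prop(1) by blast
    with l show False by (simp add: xsum_def)
  qed
qed

lemma M_pos: "0 < M" using K1_ge1 by (simp add: M_def)

lemma cls_le: "cls i \<le> Ncls" and cls_heavy: "cls i = Ncls \<longleftrightarrow> \<theta> \<le> w i"
proof -
  have "nat \<lfloor>w i/\<delta>\<rfloor> < Ncls" if "\<not> \<theta> \<le> w i"
  proof -
    have "w i/\<delta> \<le> \<theta>/\<delta>" using that delta_pos by (simp add: divide_right_mono)
    then have "\<lfloor>w i/\<delta>\<rfloor> \<le> \<lfloor>\<theta>/\<delta>\<rfloor>" by (rule floor_mono)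
    then show ?thesis unfolding Ncls_def by linarith
  qed
  then show "cls i \<le> Ncls" "cls i = Ncls \<longleftrightarrow> \<theta> \<le> w i" unfolding cls_def by force+
qed

lemma lb_props:
  assumes "0 \<le> w i"
  shows "0 \<le> lb (cls i)" "lb (cls i) \<le> w i" "\<theta> \<le> w i \<Longrightarrow> lb (cls i) = \<theta>"
    "\<not> \<theta> \<le> w i \<Longrightarrow> w i - \<delta> \<le> lb (cls i)"
proof -
  show "\<theta> \<le> w i \<Longrightarrow> lb (cls i) = \<theta>" by (simp add: lb_def cls_heavy)
  have nh: "lb (cls i) = real (nat \<lfloor>w i/\<delta>\<rfloor>) * \<delta>" if "\<not> \<theta> \<le> w i"
    using that cls_heavy[of i] by (simp add: lb_def cls_def)
  have fl: "real (nat \<lfloor>w i/\<delta>\<rfloor>) = of_int \<lfloor>w i/\<delta>\<rfloor>" using assms delta_pos by simp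
  have f1: "of_int \<lfloor>w i/\<delta>\<rfloor> * \<delta> \<le> w i"
    using delta_pos by (metis floor_divide_lower)
  have f2: "w i - \<delta> \<le> of_int \<lfloor>w i/\<delta>\<rfloor> * \<delta>"
  proof -
    have "w i/\<delta> - 1 \<le> of_int \<lfloor>w i/\<delta>\<rfloor>" by linarith
    then have "(w i/\<delta> - 1) * \<delta> \<le> of_int \<lfloor>w i/\<delta>\<rfloor> * \<delta>" using delta_pos by (intro mult_right_mono) auto
    then show ?thesis using delta_pos by (simp add: algebra_simps)
  qed
  show "\<not> \<theta> \<le> w i \<Longrightarrow> w i - \<delta> \<le> lb (cls i)" using nh fl f2 by simp
  show "0 \<le> lb (cls i)" using th mpos delta_pos by (cases "\<theta> \<le> w i") (auto simp: lb_def cls_def)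
  show "lb (cls i) \<le> w i" using nh fl f1 \<open>\<theta> \<le> w i \<Longrightarrow> lb (cls i) = \<theta>\<close> by (cases "\<theta> \<le> w i") auto
qed

lemma finite_Omega: "finite \<Omega>" unfolding \<Omega>_def by (simp add: finite_PiE)

lemma Omega_ne: "\<Omega> \<noteq> {}"
proof -
  have "(0, 0, {}) \<in> FF M Bb c" using M_pos K1_ge1 by (auto simp: FF_def Bb_def)
  then have "FF M Bb c \<noteq> {}" by blast
  then show ?thesis unfolding \<Omega>_def by (simp add: PiE_eq_empty_iff)
qed

lemma Omega_coord: "\<omega> \<in> \<Omega> \<Longrightarrow> i < n \<Longrightarrow> fst (\<omega> i) < M \<and> fst (snd (\<omega> i)) < Bb \<and> snd (snd (\<omega> i)) \<subseteq> {..<c}"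
proof -
  assume "\<omega> \<in> \<Omega>" "i < n"
  then have "\<omega> i \<in> {..<M} \<times> {..<Bb} \<times> Pow {..<c}" unfolding \<Omega>_def FF_def by (auto simp: PiE_def Pi_def)
  then show ?thesis by (cases "\<omega> i") auto
qed

lemma bucket_props:
  assumes "\<omega> \<in> \<Omega>" "i < n"
  shows "bucket \<omega> i < N" "bucket \<omega> i div M = cls i"
proof -
  have h: "fst (\<omega> i) < M" using Omega_coord[OF assms] by simp
  show "bucket \<omega> i div M = cls i" unfolding bucket_def using h M_pos by simp
  have "cls i * M + fst (\<omega> i) < cls i * M + M" using h by simp
  also have "\<dots> = (cls i + 1) * M" by simp
  also have "\<dots> \<le> (Ncls + 1) * M" using cls_le[of i] by (intro mult_le_mono1) simp
  finally show "bucket \<omega> i < N" unfolding bucket_def N_def .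
qed

end


context sk_setup begin

definition "PP x = {i\<in>{..<n}. rel i \<and> x i}"
definition "Xs x \<omega> = {b. odd (card {i\<in>PP x. bucket \<omega> i = b})}"
definition "Cert x \<omega> = {j\<in>{..<Bb}. \<exists>a<c. odd (card {i\<in>PP x. fst (snd (\<omega> i)) = j \<and> a \<in> snd (snd (\<omega> i))})}"

lemma finite_PP: "finite (PP x)" unfolding PP_def by simp

lemma c_pos: "0 < c" by (simp add: c_def)

lemma eval_A: "map (\<lambda>S. chi S x) (skA \<omega>) = map (\<lambda>l. l \<in> xsum col (Xs x \<omega>)) [0..<r]"
  unfolding skA_def map_map
proof (rule map_cong[OF refl])
  fix l
  have "{i\<in>{i\<in>{..<n}. rel i \<and> l \<in> col (bucket \<omega> i)}. x i} = {i\<in>PP x. l \<in> col (bucket \<omega> i)}"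
    unfolding PP_def by auto
  then have "chi {i\<in>{..<n}. rel i \<and> l \<in> col (bucket \<omega> i)} x = odd (card {i\<in>PP x. l \<in> col (bucket \<omega> i)})"
    unfolding chi_def by simp
  also have "\<dots> = odd (card {b. l \<in> col b \<and> odd (card {i\<in>PP x. bucket \<omega> i = b})})"
    by (rule parity_regroup[OF finite_PP])
  also have "\<dots> = (l \<in> xsum col (Xs x \<omega>))"
  proof -
    have "{b. l \<in> col b \<and> odd (card {i\<in>PP x. bucket \<omega> i = b})} = {b\<in>Xs x \<omega>. l \<in> col b}"
      unfolding Xs_def by auto
    then show ?thesis unfolding xsum_def by simp
  qed
  finally show "((\<lambda>S. chi S x) \<circ> (\<lambda>l. {i\<in>{..<n}. rel i \<and> l \<in> col (bucket \<omega> i)})) l = (l \<in> xsum col (Xs x \<omega>))"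
    by simp
qed

lemma eval_B: "map (\<lambda>S. chi S x) (skB \<omega>) =
   map (\<lambda>k. odd (card {i\<in>PP x. fst (snd (\<omega> i)) = k div c \<and> k mod c \<in> snd (snd (\<omega> i))})) [0..<Bb*c]"
  unfolding skB_def map_map
proof (rule map_cong[OF refl])
  fix k
  have "{i\<in>{i\<in>{..<n}. rel i \<and> fst (snd (\<omega> i)) = k div c \<and> k mod c \<in> snd (snd (\<omega> i))}. x i} =
        {i\<in>PP x. fst (snd (\<omega> i)) = k div c \<and> k mod c \<in> snd (snd (\<omega> i))}"
    unfolding PP_def by auto
  then show "((\<lambda>S. chi S x) \<circ> (\<lambda>k. {i\<in>{..<n}. rel i \<and> fst (snd (\<omega> i)) = k div c \<and> k mod c \<in> snd (snd (\<omega> i))})) k =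
     odd (card {i\<in>PP x. fst (snd (\<omega> i)) = k div c \<and> k mod c \<in> snd (snd (\<omega> i))})"
    unfolding chi_def by simp
qed

lemma length_sk: "length (sk \<omega>) = r + Bb*c"
  by (simp add: sk_def skA_def skB_def)

lemma sk_sub: "S \<in> set (sk \<omega>) \<Longrightarrow> S \<subseteq> {..<n}"
  by (auto simp: sk_def skA_def skB_def)

lemma g_eval: "g (map (\<lambda>S. chi S x) (sk \<omega>)) =
   (if certA (map (\<lambda>l. l \<in> xsum col (Xs x \<omega>)) [0..<r]) \<or> K1 \<le> card (Cert x \<omega>) then 1 else 0)"
proof -
  have tk: "take r (map (\<lambda>S. chi S x) (sk \<omega>)) = map (\<lambda>l. l \<in> xsum col (Xs x \<omega>)) [0..<r]"
    unfolding sk_def map_append eval_A[symmetric] by (simp add: skA_def)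
  have dr: "drop r (map (\<lambda>S. chi S x) (sk \<omega>)) =
     map (\<lambda>k. odd (card {i\<in>PP x. fst (snd (\<omega> i)) = k div c \<and> k mod c \<in> snd (snd (\<omega> i))})) [0..<Bb*c]"
    unfolding sk_def map_append eval_B[symmetric] by (simp add: skA_def)
  have "{j\<in>{..<Bb}. \<exists>a<c. drop r (map (\<lambda>S. chi S x) (sk \<omega>)) ! (j*c+a)} = Cert x \<omega>"
  proof -
    have "drop r (map (\<lambda>S. chi S x) (sk \<omega>)) ! (j*c+a) =
          odd (card {i\<in>PP x. fst (snd (\<omega> i)) = j \<and> a \<in> snd (snd (\<omega> i))})" if "j < Bb" "a < c" for j a
    proof -
      have "j*c + a < Bb*c"
      proof -
        have "j*c + a < j*c + c" using that by simp
        also have "\<dots> = (j+1)*c" by simp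
        also have "\<dots> \<le> Bb*c" using that by (intro mult_le_mono1) simp
        finally show ?thesis .
      qed
      moreover have "(j*c+a) div c = j" "(j*c+a) mod c = a" using that by auto
      ultimately show ?thesis unfolding dr by simp
    qed
    then show ?thesis unfolding Cert_def by auto
  qed
  then show ?thesis unfolding g_def certB_def tk by simp
qed

end


context sk_setup begin

lemma PP_sub: "PP x \<subseteq> {..<n}" unfolding PP_def by auto

lemma sum_PP_le: "sum w (PP x) \<le> sumw n w x"
  unfolding sumw_filter PP_def using wpos by (intro sum_mono2) auto

lemma card_PP_le: "real (card (PP x)) * (2*m) \<le> sum w (PP x)"
proof -
  have "real (card (PP x)) * (2*m) = (\<Sum>i\<in>PP x. 2*m)" by simp
  also have "\<dots> \<le> sum w (PP x)" by (rule sum_mono) (auto simp: PP_def rel_def)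
  finally show ?thesis .
qed

lemma odd_card_ne: "odd (card A) \<Longrightarrow> A \<noteq> {}" by auto

lemma Cert_sub: "Cert x \<omega> \<subseteq> (\<lambda>i. fst (snd (\<omega> i))) ` PP x"
proof
  fix j assume "j \<in> Cert x \<omega>"
  then obtain a where "odd (card {i\<in>PP x. fst (snd (\<omega> i)) = j \<and> a \<in> snd (snd (\<omega> i))})"
    unfolding Cert_def by auto
  from odd_card_ne[OF this] obtain i where "i \<in> PP x" "fst (snd (\<omega> i)) = j" by auto
  then show "j \<in> (\<lambda>i. fst (snd (\<omega> i))) ` PP x" by auto
qed

lemma Xs_sub: "Xs x \<omega> \<subseteq> bucket \<omega> ` PP x"
proof
  fix b assume "b \<in> Xs x \<omega>"
  from odd_card_ne[OF this[unfolded Xs_def, simplified]] obtain i where "i \<in> PP x" "bucket \<omega> i = b" by auto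
  then show "b \<in> bucket \<omega> ` PP x" by auto
qed

lemma lowsum_le:
  assumes "\<omega> \<in> \<Omega>"
  shows "lowsum (Xs x \<omega>) \<le> sum w (PP x)"
proof -
  have nn: "0 \<le> lb (b div M)" if bi: "b \<in> bucket \<omega> ` PP x" for b
  proof -
    obtain i where i: "i \<in> PP x" "b = bucket \<omega> i" using bi by auto
    then have "i < n" using PP_sub by auto
    then show ?thesis using i bucket_props[OF assms] lb_props wpos by auto
  qed
  have "lowsum (Xs x \<omega>) \<le> (\<Sum>b\<in>bucket \<omega> ` PP x. lb (b div M))"
    unfolding lowsum_def by (rule sum_mono2) (use Xs_sub finite_PP nn in auto)
  also have "\<dots> \<le> (\<Sum>i\<in>PP x. lb (bucket \<omega> i div M))"
    using sum_image_le[OF finite_PP, where g="\<lambda>b. lb (b div M)" and f="bucket \<omega>"] nn by (simp add: o_def)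
  also have "\<dots> = (\<Sum>i\<in>PP x. lb (cls i))"
  proof (rule sum.cong[OF refl])
    fix i assume "i \<in> PP x"
    then have "i < n" using PP_sub by auto
    then show "lb (bucket \<omega> i div M) = lb (cls i)" using bucket_props(2)[OF assms] by simp
  qed
  also have "\<dots> \<le> sum w (PP x)"
  proof (rule sum_mono)
    fix i assume "i \<in> PP x"
    then have "i < n" using PP_sub by auto
    then show "lb (cls i) \<le> w i" using wpos lb_props(2) by auto
  qed
  finally show ?thesis .
qed

lemma sound:
  assumes x: "x \<in> cube n" and neg: "sumw n w x < \<theta>" and \<omega>: "\<omega> \<in> \<Omega>"
  shows "g (map (\<lambda>S. chi S x) (sk \<omega>)) = 0"
proof -
  have sw: "sum w (PP x) < \<theta>" using sum_PP_le[of x] neg by linarith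
  have "real (card (PP x)) * (2*m) < \<theta>" using card_PP_le[of x] sw by linarith
  then have "real (card (PP x)) < \<theta>/(2*m)" using mpos by (simp add: field_simps)
  then have cP: "card (PP x) < K1" using K1_ge by linarith
  have "card (Cert x \<omega>) \<le> card ((\<lambda>i. fst (snd (\<omega> i))) ` PP x)"
    by (rule card_mono[OF _ Cert_sub]) (simp add: finite_PP)
  also have "\<dots> \<le> card (PP x)" by (rule card_image_le[OF finite_PP])
  finally have "card (Cert x \<omega>) \<le> card (PP x)" .
  then have nB: "\<not> K1 \<le> card (Cert x \<omega>)" using cP by linarith
  have "card (Xs x \<omega>) \<le> card (bucket \<omega> ` PP x)"
    by (rule card_mono[OF _ Xs_sub]) (simp add: finite_PP)
  also have "\<dots> \<le> card (PP x)" by (rule card_image_le[OF finite_PP])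
  finally have "card (Xs x \<omega>) \<le> card (PP x)" .
  moreover have "Xs x \<omega> \<subseteq> {..<N}"
  proof
    fix b assume "b \<in> Xs x \<omega>"
    then obtain i where "i \<in> PP x" "b = bucket \<omega> i" using Xs_sub by blast
    then show "b \<in> {..<N}" using PP_sub bucket_props(1)[OF \<omega>, of i] by auto
  qed
  moreover have "lowsum (Xs x \<omega>) < \<theta>" using lowsum_le[OF \<omega>, of x] sw by linarith
  ultimately have nA: "\<not> certA (map (\<lambda>l. l \<in> xsum col (Xs x \<omega>)) [0..<r])"
    unfolding certA_def using cP by auto
  show ?thesis unfolding g_eval using nA nB by simp
qed

end


context sk_setup begin

lemma sumPP_big:
  assumes x: "x \<in> cube n" and pos: "\<theta> \<le> sumw n w x"
  shows "\<theta> + m \<le> sum w (PP x)"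
proof -
  let ?xr = "\<lambda>i. x i \<and> 2*m \<le> w i"
  have "\<theta> \<le> sumw n w ?xr" using relevance[OF wpos marg x] pos by simp
  moreover have "?xr \<in> cube n" using x by (auto simp: cube_def)
  then have "m \<le> \<bar>sumw n w ?xr - \<theta>\<bar>" using marg by auto
  moreover have "sumw n w ?xr = sum w (PP x)"
    unfolding sumw_filter PP_def rel_def by (rule sum.cong) auto
  ultimately show ?thesis by linarith
qed

lemma Xs_sub_N: "\<omega> \<in> \<Omega> \<Longrightarrow> Xs x \<omega> \<subseteq> {..<N}"
proof
  fix b assume \<omega>: "\<omega> \<in> \<Omega>" and "b \<in> Xs x \<omega>"
  then obtain i where "i \<in> PP x" "b = bucket \<omega> i" using Xs_sub by blast
  then show "b \<in> {..<N}" using PP_sub bucket_props(1)[OF \<omega>, of i] by auto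
qed

lemma compA:
  assumes x: "x \<in> cube n" and pos: "\<theta> \<le> sumw n w x" and cP: "card (PP x) < Q"
    and \<omega>: "\<omega> \<in> \<Omega>" and inj: "inj_on (\<lambda>i. fst (\<omega> i)) (PP x)"
  shows "certA (map (\<lambda>l. l \<in> xsum col (Xs x \<omega>)) [0..<r])"
proof (rule ccontr)
  have bmod: "bucket \<omega> i mod M = fst (\<omega> i)" if "i \<in> PP x" for i
  proof -
    have "i < n" using that PP_sub by auto
    then have "fst (\<omega> i) < M" using Omega_coord[OF \<omega>] by simp
    then show ?thesis unfolding bucket_def by simp
  qed
  have injb: "inj_on (bucket \<omega>) (PP x)"
  proof (rule inj_onI)
    fix i k assume "i \<in> PP x" "k \<in> PP x" "bucket \<omega> i = bucket \<omega> k"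
    then have "fst (\<omega> i) = fst (\<omega> k)" using bmod[OF \<open>i \<in> PP x\<close>] bmod[OF \<open>k \<in> PP x\<close>] by simp
    then show "i = k" using inj_onD[OF inj _ \<open>i \<in> PP x\<close> \<open>k \<in> PP x\<close>] by simp
  qed
  have Xs_eq: "Xs x \<omega> = bucket \<omega> ` PP x"
  proof
    show "Xs x \<omega> \<subseteq> bucket \<omega> ` PP x" by (rule Xs_sub)
    show "bucket \<omega> ` PP x \<subseteq> Xs x \<omega>"
    proof
      fix b assume "b \<in> bucket \<omega> ` PP x"
      then obtain i0 where i0: "i0 \<in> PP x" "b = bucket \<omega> i0" by auto
      have "{i\<in>PP x. bucket \<omega> i = b} = {i0}"
      proof
        show "{i\<in>PP x. bucket \<omega> i = b} \<subseteq> {i0}"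
        proof
          fix i assume "i \<in> {i\<in>PP x. bucket \<omega> i = b}"
          then have "i \<in> PP x" "bucket \<omega> i = bucket \<omega> i0" using i0 by auto
          then show "i \<in> {i0}" using inj_onD[OF injb _ _ i0(1)] by simp
        qed
        show "{i0} \<subseteq> {i\<in>PP x. bucket \<omega> i = b}" using i0 by simp
      qed
      then show "b \<in> Xs x \<omega>" unfolding Xs_def by simp
    qed
  qed
  have lows: "lowsum (Xs x \<omega>) = (\<Sum>i\<in>PP x. lb (cls i))"
  proof -
    have "lowsum (Xs x \<omega>) = (\<Sum>i\<in>PP x. lb (bucket \<omega> i div M))"
      unfolding lowsum_def Xs_eq by (simp add: sum.reindex[OF injb])
    also have "\<dots> = (\<Sum>i\<in>PP x. lb (cls i))"
    proof (rule sum.cong[OF refl])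
      fix i assume "i \<in> PP x"
      then have "i < n" using PP_sub by auto
      then show "lb (bucket \<omega> i div M) = lb (cls i)" using bucket_props(2)[OF \<omega>] by simp
    qed
    finally show ?thesis .
  qed
  have wP: "\<And>i. i \<in> PP x \<Longrightarrow> 0 \<le> w i" using PP_sub wpos by auto
  have big: "\<theta> \<le> lowsum (Xs x \<omega>)"
  proof (cases "\<exists>i\<in>PP x. \<theta> \<le> w i")
    case True
    then obtain i0 where i0: "i0 \<in> PP x" "\<theta> \<le> w i0" by auto
    have "\<theta> = lb (cls i0)" using lb_props(3)[OF wP[OF i0(1)] i0(2)] by simp
    also have "\<dots> \<le> (\<Sum>i\<in>PP x. lb (cls i))"
      by (rule member_le_sum) (use i0 finite_PP lb_props(1) wP in auto)
    finally show ?thesis using lows by simp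
  next
    case False
    have "\<theta> + m - real (card (PP x)) * \<delta> \<le> sum w (PP x) - real (card (PP x)) * \<delta>"
      using sumPP_big[OF x pos] by simp
    also have "\<dots> = (\<Sum>i\<in>PP x. w i - \<delta>)" by (simp add: sum_subtractf)
    also have "\<dots> \<le> (\<Sum>i\<in>PP x. lb (cls i))"
      by (rule sum_mono) (use False lb_props(4) wP in auto)
    finally have 1: "\<theta> + m - real (card (PP x)) * \<delta> \<le> lowsum (Xs x \<omega>)" using lows by simp
    have "real (card (PP x)) * \<delta> \<le> real Q * \<delta>" using cP delta_pos by (intro mult_right_mono) auto
    also have "\<dots> = m" using Q_pos by (simp add: \<delta>_def)
    finally show ?thesis using 1 by linarith
  qed
  assume nc: "\<not> certA (map (\<lambda>l. l \<in> xsum col (Xs x \<omega>)) [0..<r])"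
  have "\<exists>Z. Z \<subseteq> {..<N} \<and> card Z \<le> K1 \<and> lowsum Z < \<theta> \<and> map (\<lambda>l. l \<in> xsum col (Xs x \<omega>)) [0..<r] = map (\<lambda>l. l \<in> xsum col Z) [0..<r]"
    using nc unfolding certA_def by (rule notnotD)
  then obtain Z where Z: "Z \<subseteq> {..<N}" "card Z \<le> K1" "lowsum Z < \<theta>"
    "map (\<lambda>l. l \<in> xsum col (Xs x \<omega>)) [0..<r] = map (\<lambda>l. l \<in> xsum col Z) [0..<r]"
    by (elim exE conjE) simp
  have lr: "(l \<in> xsum col (Xs x \<omega>)) = (l \<in> xsum col Z)" if "l < r" for l
  proof -
    have "\<forall>l\<in>{0..<r}. (l \<in> xsum col (Xs x \<omega>)) = (l \<in> xsum col Z)" using Z(4) by simp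
    then show ?thesis using that by simp
  qed
  have xe: "xsum col (Xs x \<omega>) = xsum col Z"
  proof (rule set_eqI)
    fix l show "l \<in> xsum col (Xs x \<omega>) \<longleftrightarrow> l \<in> xsum col Z"
    proof (cases "l < r")
      case True then show ?thesis by (rule lr)
    next
      case False then show ?thesis using xsum_sub[of "Xs x \<omega>"] xsum_sub[of Z] by auto
    qed
  qed
  have finX: "finite (Xs x \<omega>)" using Xs_sub_N[OF \<omega>] finite_subset by blast
  have finZ: "finite Z" using Z(1) finite_subset by blast
  define S where "S = (Xs x \<omega> - Z) \<union> (Z - Xs x \<omega>)"
  have S0: "xsum col S = {}" unfolding S_def xsum_sdiff[OF finX finZ] xe by simp
  have SN: "S \<subseteq> {..<N}" unfolding S_def using Xs_sub_N[OF \<omega>, of x] Z(1) by auto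
  have cS: "card S \<le> D"
  proof -
    have "card S \<le> card (Xs x \<omega> \<union> Z)" unfolding S_def by (rule card_mono) (use finX finZ in auto)
    also have "\<dots> \<le> card (Xs x \<omega>) + card Z" by (rule card_Un_le)
    also have "card (Xs x \<omega>) = card (PP x)" unfolding Xs_eq by (rule card_image[OF injb])
    finally show ?thesis using cP Z(2) by (simp add: D_def Q_def)
  qed
  have "S = {}"
  proof (rule ccontr)
    assume "S \<noteq> {}"
    from col_prop(2)[OF SN this cS] S0 show False by simp
  qed
  then have "Xs x \<omega> = Z" unfolding S_def by auto
  then show False using big Z(3) by simp
qed

end


context sk_setup begin

lemma g_certA: "certA (map (\<lambda>l. l \<in> xsum col (Xs x \<omega>)) [0..<r]) \<Longrightarrow> g (map (\<lambda>S. chi S x) (sk \<omega>)) = 1"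
  unfolding g_eval by simp

lemma g_certB: "K1 \<le> card (Cert x \<omega>) \<Longrightarrow> g (map (\<lambda>S. chi S x) (sk \<omega>)) = 1"
  unfolding g_eval by simp

lemma pairs_bound:
  fixes T :: "nat set"
  assumes "finite T"
  shows "2 * card {p\<in>T\<times>T. fst p < snd p} \<le> card T * card T"
proof -
  have "{p\<in>T\<times>T. fst p < snd p} = {(i,k). i\<in>T \<and> k\<in>T \<and> i<k \<and> True}" by auto
  then show ?thesis using card_pairs[OF assms, of "\<lambda>_ _. True"] by simp
qed

lemma sum_pairs_bound:
  fixes T :: "nat set" and K :: nat and C :: "nat \<Rightarrow> nat \<Rightarrow> (nat \<Rightarrow> nat \<times> nat \<times> nat set) \<Rightarrow> bool"
  assumes "finite T"
    and "\<And>i k. i \<in> T \<Longrightarrow> k \<in> T \<Longrightarrow> i < k \<Longrightarrow> card {\<omega>\<in>\<Omega>. C i k \<omega>} * K \<le> card \<Omega>"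
  shows "(\<Sum>p\<in>T\<times>T. card {\<omega>\<in>\<Omega>. fst p < snd p \<and> C (fst p) (snd p) \<omega>}) * K \<le> card {p\<in>T\<times>T. fst p < snd p} * card \<Omega>"
proof -
  have "(\<Sum>p\<in>T\<times>T. card {\<omega>\<in>\<Omega>. fst p < snd p \<and> C (fst p) (snd p) \<omega>}) * K =
        (\<Sum>p\<in>T\<times>T. card {\<omega>\<in>\<Omega>. fst p < snd p \<and> C (fst p) (snd p) \<omega>} * K)"
    by (simp add: sum_distrib_right)
  also have "\<dots> \<le> (\<Sum>p\<in>T\<times>T. if fst p < snd p then card \<Omega> else 0)"
  proof (rule sum_mono)
    fix p assume p: "p \<in> T\<times>T"
    show "card {\<omega>\<in>\<Omega>. fst p < snd p \<and> C (fst p) (snd p) \<omega>} * K \<le> (if fst p < snd p then card \<Omega> else 0)"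
    proof (cases "fst p < snd p")
      case True
      then have "{\<omega>\<in>\<Omega>. fst p < snd p \<and> C (fst p) (snd p) \<omega>} = {\<omega>\<in>\<Omega>. C (fst p) (snd p) \<omega>}" by simp
      then show ?thesis using assms(2)[of "fst p" "snd p"] p True by auto
    next
      case False then show ?thesis by simp
    qed
  qed
  also have "\<dots> = card {p\<in>T\<times>T. fst p < snd p} * card \<Omega>"
    using assms(1) by (simp add: sum.If_cases Int_def)
  finally show ?thesis .
qed

lemma arith_cancel:
  fixes b s ZZ M k :: nat
  assumes "b * M \<le> s * ZZ" "k * s * ZZ \<le> M * ZZ" "0 < M"
  shows "k * b \<le> ZZ"
proof -
  have "(k * b) * M = k * (b * M)" by (simp add: mult.assoc)
  also have "\<dots> \<le> k * (s * ZZ)" using assms(1) by (rule mult_le_mono2)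
  also have "\<dots> = k * s * ZZ" by (simp add: mult.assoc)
  also have "\<dots> \<le> M * ZZ" by (rule assms(2))
  also have "\<dots> = ZZ * M" by (simp add: mult.commute)
  finally have "(k * b) * M \<le> ZZ * M" .
  then show ?thesis using assms(3) by simp
qed

lemma compl_small:
  assumes x: "x \<in> cube n" and pos: "\<theta> \<le> sumw n w x" and cP: "card (PP x) < Q"
  shows "3 * card {\<omega>\<in>\<Omega>. g (map (\<lambda>S. chi S x) (sk \<omega>)) \<noteq> 1} \<le> card \<Omega>"
proof -
  let ?T = "PP x"
  let ?C = "\<lambda>i k \<omega>. fst (\<omega> i) = fst (\<omega> k)"
  have sub: "{\<omega>\<in>\<Omega>. g (map (\<lambda>S. chi S x) (sk \<omega>)) \<noteq> 1} \<subseteq>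
             {\<omega>\<in>\<Omega>. \<exists>p\<in>?T\<times>?T. fst p < snd p \<and> ?C (fst p) (snd p) \<omega>}"
  proof
    fix \<omega> assume a: "\<omega> \<in> {\<omega>\<in>\<Omega>. g (map (\<lambda>S. chi S x) (sk \<omega>)) \<noteq> 1}"
    then have \<omega>: "\<omega> \<in> \<Omega>" by simp
    show "\<omega> \<in> {\<omega>\<in>\<Omega>. \<exists>p\<in>?T\<times>?T. fst p < snd p \<and> ?C (fst p) (snd p) \<omega>}"
    proof (rule ccontr)
      assume "\<omega> \<notin> {\<omega>\<in>\<Omega>. \<exists>p\<in>?T\<times>?T. fst p < snd p \<and> ?C (fst p) (snd p) \<omega>}"
      then have nc: "\<And>i k. i \<in> ?T \<Longrightarrow> k \<in> ?T \<Longrightarrow> i < k \<Longrightarrow> fst (\<omega> i) \<noteq> fst (\<omega> k)" using \<omega> by auto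
      have "inj_on (\<lambda>i. fst (\<omega> i)) ?T"
      proof (rule inj_onI)
        fix i k assume ik: "i \<in> ?T" "k \<in> ?T" "fst (\<omega> i) = fst (\<omega> k)"
        show "i = k"
        proof (rule ccontr)
          assume "i \<noteq> k"
          then have "i < k \<or> k < i" by linarith
          then show False using nc[OF ik(1,2)] nc[OF ik(2,1)] ik(3) by auto
        qed
      qed
      from g_certA[OF compA[OF x pos cP \<omega> this]] a show False by simp
    qed
  qed
  have fin: "finite (?T \<times> ?T)" using finite_PP by simp
  have "card {\<omega>\<in>\<Omega>. g (map (\<lambda>S. chi S x) (sk \<omega>)) \<noteq> 1} * M \<le>
        card {\<omega>\<in>\<Omega>. \<exists>p\<in>?T\<times>?T. fst p < snd p \<and> ?C (fst p) (snd p) \<omega>} * M"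
    by (intro mult_le_mono1 card_mono) (use sub finite_Omega in auto)
  also have "\<dots> \<le> (\<Sum>p\<in>?T\<times>?T. card {\<omega>\<in>\<Omega>. fst p < snd p \<and> ?C (fst p) (snd p) \<omega>}) * M"
    by (intro mult_le_mono1 union_count finite_Omega fin)
  also have "\<dots> \<le> card {p\<in>?T\<times>?T. fst p < snd p} * card \<Omega>"
  proof (rule sum_pairs_bound[OF finite_PP])
    fix i k assume "i \<in> ?T" "k \<in> ?T" "i < k"
    then have "i < n" "k < n" "i \<noteq> k" using PP_sub by auto
    then show "card {\<omega>\<in>\<Omega>. ?C i k \<omega>} * M \<le> card \<Omega>" unfolding \<Omega>_def by (rule collision1)
  qed
  finally have b1: "card {\<omega>\<in>\<Omega>. g (map (\<lambda>S. chi S x) (sk \<omega>)) \<noteq> 1} * M \<le> card {p\<in>?T\<times>?T. fst p < snd p} * card \<Omega>" .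
  have "card ?T * card ?T < Q * Q" using cP by (intro mult_strict_mono) auto
  then have "2 * card {p\<in>?T\<times>?T. fst p < snd p} < Q * Q" using pairs_bound[OF finite_PP, of x] by linarith
  then have "3 * card {p\<in>?T\<times>?T. fst p < snd p} \<le> M" by (simp add: Q_def M_def power2_eq_square)
  then have "3 * card {p\<in>?T\<times>?T. fst p < snd p} * card \<Omega> \<le> M * card \<Omega>" by (rule mult_le_mono1)
  then show ?thesis by (rule arith_cancel[OF b1 _ M_pos])
qed

end


context sk_setup begin

lemma K1_le_2e: "K1 \<le> 2^e" using Ke by (simp add: K1_def)

lemma arithE1:
  fixes a q ZZ k :: nat
  assumes "a*(k+1)*(12*k) \<le> q*ZZ" "2*q \<le> (2*k)*(2*k)" "1 \<le> k"
  shows "6*a \<le> ZZ"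
proof -
  have "(6*a)*(4*k*k) = 24*a*k*k" by simp
  also have "\<dots> \<le> 2*(a*(k+1)*(12*k))" by (simp add: algebra_simps)
  also have "\<dots> \<le> 2*(q*ZZ)" by (rule mult_le_mono2[OF assms(1)])
  also have "\<dots> = (2*q)*ZZ" by simp
  also have "\<dots> \<le> (2*k)*(2*k)*ZZ" using assms(2) by (rule mult_le_mono1)
  also have "\<dots> = ZZ*(4*k*k)" by simp
  finally have "(6*a)*(4*k*k) \<le> ZZ*(4*k*k)" .
  then show ?thesis using assms(3) by simp
qed

lemma arithE2:
  fixes a ZZ k P B :: nat
  assumes "a*P \<le> B*ZZ" "B = 12*k" "128*k \<le> P" "1 \<le> k"
  shows "6*a \<le> ZZ"
proof -
  have "(6*a)*P = 6*(a*P)" by simp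
  also have "\<dots> \<le> 6*(B*ZZ)" using assms(1) by simp
  also have "\<dots> = 72*k*ZZ" using assms(2) by simp
  also have "\<dots> \<le> 128*k*ZZ" by simp
  also have "\<dots> \<le> P*ZZ" using assms(3) by (rule mult_le_mono1)
  finally have "(6*a)*P \<le> ZZ*P" by (simp add: mult.commute)
  moreover have "0 < P" using assms(3,4) by linarith
  ultimately show ?thesis by simp
qed

lemma compl_big:
  assumes x: "x \<in> cube n" and pos: "\<theta> \<le> sumw n w x" and cP: "Q \<le> card (PP x)"
  shows "3 * card {\<omega>\<in>\<Omega>. g (map (\<lambda>S. chi S x) (sk \<omega>)) \<noteq> 1} \<le> card \<Omega>"
proof -
  obtain T where T: "T \<subseteq> PP x" "card T = Q" "finite T"
    using obtain_subset_with_card_n[OF cP] by metis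
  let ?h = "\<lambda>\<omega> i. fst (snd (\<omega> i))"
  define E1 where "E1 = {\<omega>\<in>\<Omega>. K1 + 1 \<le> card {p\<in>T\<times>T. fst p < snd p \<and> ?h \<omega> (fst p) = ?h \<omega> (snd p)}}"
  define E2 where "E2 = {\<omega>\<in>\<Omega>. \<exists>j\<in>{..<Bb}. (\<exists>i\<in>PP x. ?h \<omega> i = j) \<and>
            (\<forall>a<c. even (card {i\<in>PP x. ?h \<omega> i = j \<and> a \<in> snd (snd (\<omega> i))}))}"
  have sub: "{\<omega>\<in>\<Omega>. g (map (\<lambda>S. chi S x) (sk \<omega>)) \<noteq> 1} \<subseteq> E1 \<union> E2"
  proof
    fix \<omega> assume a: "\<omega> \<in> {\<omega>\<in>\<Omega>. g (map (\<lambda>S. chi S x) (sk \<omega>)) \<noteq> 1}"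
    then have \<omega>: "\<omega> \<in> \<Omega>" by simp
    show "\<omega> \<in> E1 \<union> E2"
    proof (rule ccontr)
      assume "\<omega> \<notin> E1 \<union> E2"
      then have n1: "\<not> K1 + 1 \<le> card {p\<in>T\<times>T. fst p < snd p \<and> ?h \<omega> (fst p) = ?h \<omega> (snd p)}"
        and n2: "\<And>j. j < Bb \<Longrightarrow> (\<exists>i\<in>PP x. ?h \<omega> i = j) \<Longrightarrow>
                   (\<exists>a<c. odd (card {i\<in>PP x. ?h \<omega> i = j \<and> a \<in> snd (snd (\<omega> i))}))"
        using \<omega> unfolding E1_def E2_def by auto
      have "{(i,k). i\<in>T \<and> k\<in>T \<and> i<k \<and> ?h \<omega> i = ?h \<omega> k} =
            {p\<in>T\<times>T. fst p < snd p \<and> ?h \<omega> (fst p) = ?h \<omega> (snd p)}" by auto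
      then have "card T \<le> card (?h \<omega> ` T) + card {p\<in>T\<times>T. fst p < snd p \<and> ?h \<omega> (fst p) = ?h \<omega> (snd p)}"
        using card_image_pairs[OF T(3), of "?h \<omega>"] by simp
      then have cI: "K1 \<le> card (?h \<omega> ` T)" using n1 T(2) by (simp add: Q_def)
      have "?h \<omega> ` T \<subseteq> Cert x \<omega>"
      proof
        fix j assume "j \<in> ?h \<omega> ` T"
        then obtain i where i: "i \<in> T" "j = ?h \<omega> i" by auto
        then have iP: "i \<in> PP x" using T(1) by auto
        then have "i < n" using PP_sub by auto
        then have "j < Bb" using Omega_coord[OF \<omega>] i by simp
        moreover have "\<exists>a<c. odd (card {i\<in>PP x. ?h \<omega> i = j \<and> a \<in> snd (snd (\<omega> i))})"
          using n2[OF \<open>j < Bb\<close>] iP i by auto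
        ultimately show "j \<in> Cert x \<omega>" unfolding Cert_def by auto
      qed
      then have "card (?h \<omega> ` T) \<le> card (Cert x \<omega>)" by (rule card_mono[rotated]) (simp add: Cert_def)
      with cI have "K1 \<le> card (Cert x \<omega>)" by linarith
      from g_certB[OF this] a show False by simp
    qed
  qed
  have finT2: "finite (T \<times> T)" using T(3) by simp
  have "card E1 * (K1 + 1) \<le> (\<Sum>p\<in>T\<times>T. card {\<omega>\<in>\<Omega>. fst p < snd p \<and> ?h \<omega> (fst p) = ?h \<omega> (snd p)})"
    unfolding E1_def by (rule markov_count[OF finite_Omega finT2])
  then have "card E1 * (K1 + 1) * Bb \<le> (\<Sum>p\<in>T\<times>T. card {\<omega>\<in>\<Omega>. fst p < snd p \<and> ?h \<omega> (fst p) = ?h \<omega> (snd p)}) * Bb"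
    by (rule mult_le_mono1)
  also have "\<dots> \<le> card {p\<in>T\<times>T. fst p < snd p} * card \<Omega>"
  proof (rule sum_pairs_bound[OF T(3)])
    fix i k assume "i \<in> T" "k \<in> T" "i < k"
    then have "i < n" "k < n" "i \<noteq> k" using T(1) PP_sub by auto
    then show "card {\<omega>\<in>\<Omega>. ?h \<omega> i = ?h \<omega> k} * Bb \<le> card \<Omega>" unfolding \<Omega>_def by (rule collision2)
  qed
  finally have e1: "card E1 * (K1 + 1) * Bb \<le> card {p\<in>T\<times>T. fst p < snd p} * card \<Omega>" .
  have pb: "2 * card {p\<in>T\<times>T. fst p < snd p} \<le> Q * Q" using pairs_bound[OF T(3)] T(2) by simp
  have E1b: "6 * card E1 \<le> card \<Omega>"
    by (rule arithE1[OF _ _ K1_ge1]) (use e1 pb in \<open>simp_all add: Bb_def Q_def\<close>)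
  have "card E2 \<le> (\<Sum>j\<in>{..<Bb}. card {\<omega>\<in>\<Omega>. (\<exists>i\<in>PP x. ?h \<omega> i = j) \<and>
            (\<forall>a<c. even (card {i\<in>PP x. ?h \<omega> i = j \<and> a \<in> snd (snd (\<omega> i))}))})"
    unfolding E2_def by (rule union_count[OF finite_Omega]) simp
  then have "card E2 * 2^c \<le> (\<Sum>j\<in>{..<Bb}. card {\<omega>\<in>\<Omega>. (\<exists>i\<in>PP x. ?h \<omega> i = j) \<and>
            (\<forall>a<c. even (card {i\<in>PP x. ?h \<omega> i = j \<and> a \<in> snd (snd (\<omega> i))}))}) * 2^c"
    by (rule mult_le_mono1)
  also have "\<dots> = (\<Sum>j\<in>{..<Bb}. card {\<omega>\<in>\<Omega>. (\<exists>i\<in>PP x. ?h \<omega> i = j) \<and>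
            (\<forall>a<c. even (card {i\<in>PP x. ?h \<omega> i = j \<and> a \<in> snd (snd (\<omega> i))}))} * 2^c)"
    by (simp add: sum_distrib_right)
  also have "\<dots> \<le> (\<Sum>j\<in>{..<Bb}. card \<Omega>)"
  proof (rule sum_mono)
    fix j
    show "card {\<omega>\<in>\<Omega>. (\<exists>i\<in>PP x. ?h \<omega> i = j) \<and>
            (\<forall>a<c. even (card {i\<in>PP x. ?h \<omega> i = j \<and> a \<in> snd (snd (\<omega> i))}))} * 2^c \<le> card \<Omega>"
      unfolding \<Omega>_def by (rule uncert_count[OF PP_sub])
  qed
  also have "\<dots> = Bb * card \<Omega>" by simp
  finally have e2: "card E2 * 2^c \<le> Bb * card \<Omega>" .
  have "128 * K1 \<le> 2^c"
  proof -
    have "128 * K1 \<le> 128 * 2^e" using K1_le_2e by simp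
    also have "\<dots> = 2^c" by (simp add: c_def power_add)
    finally show ?thesis .
  qed
  then have E2b: "6 * card E2 \<le> card \<Omega>" by (intro arithE2[OF e2 _ _ K1_ge1]) (simp_all add: Bb_def)
  have "card {\<omega>\<in>\<Omega>. g (map (\<lambda>S. chi S x) (sk \<omega>)) \<noteq> 1} \<le> card (E1 \<union> E2)"
    by (rule card_mono[OF _ sub]) (simp add: E1_def E2_def finite_Omega)
  also have "\<dots> \<le> card E1 + card E2" by (rule card_Un_le)
  finally show ?thesis using E1b E2b by linarith
qed

end


context sk_setup begin

lemma sketch_ok:
  assumes fx: "\<forall>x\<in>cube n. f x = sgn01 (ltf_form n w \<theta> x)"
  shows "sketchable n (1/3) f (r + Bb*c)"
  unfolding sketchable_def
proof (intro exI[of _ "map_pmf sk (pmf_of_set \<Omega>)"] exI[of _ g] conjI)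
  show "\<forall>Ss\<in>set_pmf (map_pmf sk (pmf_of_set \<Omega>)). length Ss = r + Bb * c \<and> (\<forall>S\<in>set Ss. S \<subseteq> {..<n})"
  proof
    fix Ss assume "Ss \<in> set_pmf (map_pmf sk (pmf_of_set \<Omega>))"
    then obtain \<omega> where "Ss = sk \<omega>" using finite_Omega Omega_ne by auto
    then show "length Ss = r + Bb * c \<and> (\<forall>S\<in>set Ss. S \<subseteq> {..<n})"
      using length_sk sk_sub by auto
  qed
next
  show "\<forall>x\<in>cube n. 1 - 1/3 \<le> measure_pmf.prob (map_pmf sk (pmf_of_set \<Omega>)) {Ss. g (map (\<lambda>S. chi S x) Ss) = f x}"
  proof
  fix x assume x: "x \<in> cube n"
  let ?G = "{\<omega>. g (map (\<lambda>S. chi S x) (sk \<omega>)) = f x}"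
  have pr: "measure_pmf.prob (map_pmf sk (pmf_of_set \<Omega>)) {Ss. g (map (\<lambda>S. chi S x) Ss) = f x}
        = real (card (\<Omega> \<inter> ?G)) / real (card \<Omega>)"
    by (simp add: measure_map_pmf measure_pmf_of_set[OF Omega_ne finite_Omega] vimage_def)
  have cpos: "0 < card \<Omega>" using finite_Omega Omega_ne by (simp add: card_gt_0_iff)
  show "1 - 1/3 \<le> measure_pmf.prob (map_pmf sk (pmf_of_set \<Omega>)) {Ss. g (map (\<lambda>S. chi S x) Ss) = f x}"
  proof (cases "sumw n w x < \<theta>")
    case True
    then have "f x = 0" using fx x by (simp add: sgn01_def ltf_form_sumw)
    then have "\<Omega> \<inter> ?G = \<Omega>" using sound[OF x True] by auto
    then show ?thesis unfolding pr using cpos by simp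
  next
    case False
    then have "f x = 1" using fx x by (simp add: sgn01_def ltf_form_sumw)
    have pos: "\<theta> \<le> sumw n w x" using False by simp
    have bad: "3 * card {\<omega>\<in>\<Omega>. g (map (\<lambda>S. chi S x) (sk \<omega>)) \<noteq> 1} \<le> card \<Omega>"
    proof (cases "card (PP x) < Q")
      case True then show ?thesis by (rule compl_small[OF x pos])
    next
      case False then show ?thesis by (intro compl_big[OF x pos]) simp
    qed
    have split: "card \<Omega> = card (\<Omega> \<inter> ?G) + card {\<omega>\<in>\<Omega>. g (map (\<lambda>S. chi S x) (sk \<omega>)) \<noteq> 1}"
    proof -
      have "\<Omega> = (\<Omega> \<inter> ?G) \<union> {\<omega>\<in>\<Omega>. g (map (\<lambda>S. chi S x) (sk \<omega>)) \<noteq> 1}" using \<open>f x = 1\<close> by auto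
      moreover have "(\<Omega> \<inter> ?G) \<inter> {\<omega>\<in>\<Omega>. g (map (\<lambda>S. chi S x) (sk \<omega>)) \<noteq> 1} = {}" using \<open>f x = 1\<close> by auto
      ultimately show ?thesis using finite_Omega
        by (metis (no_types, lifting) card_Un_disjoint finite_Int finite_subset inf_le1 mem_Collect_eq subsetI)
    qed
    have "2 * real (card \<Omega>) \<le> 3 * real (card (\<Omega> \<inter> ?G))"
      using bad split by linarith
    then show ?thesis unfolding pr using cpos by (simp add: field_simps)
  qed
  qed
qed

lemma k_eq: "r + Bb*c = K1 * (24*e + 105)"
  by (simp add: r_def Bb_def c_def D_def algebra_simps)

end

lemma exists_e:
  fixes K :: nat assumes "1 \<le> K"
  shows "\<exists>e. K \<le> 2^e \<and> 2^e < 2*K"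
proof -
  define e where "e = (LEAST e. K \<le> 2^e)"
  have ex: "\<exists>e. K \<le> 2^e" by (rule exI[of _ K]) (simp add: less_imp_le)
  have 1: "K \<le> 2^e" unfolding e_def by (rule LeastI_ex[OF ex])
  have "2^e < 2*K"
  proof (cases e)
    case 0 then show ?thesis using assms by simp
  next
    case (Suc e')
    then have "\<not> K \<le> 2^e'" unfolding e_def using not_less_Least[of e' "\<lambda>e. K \<le> 2^e"] by (metis lessI e_def)
    then show ?thesis using Suc by simp
  qed
  with 1 show ?thesis by blast
qed

lemma ln2_ge: "1/2 \<le> ln (2::real)"
proof -
  have "ln (1/2::real) \<le> 1/2 - 1" by (rule ln_le_minus_one) simp
  then show ?thesis by (simp add: ln_div)
qed

theorem mainTheorem8:
  shows "\<exists>C::real. \<forall>(n::nat) (\<theta>::real) (m::real) f.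
           is_LTF n \<theta> m f \<and> \<theta> \<ge> 2 * m \<and> m > 0 \<longrightarrow>
           real (R_lin n (1/3) f) \<le> C * (\<theta> / m) * ln (\<theta> / m)"
proof (intro exI[of _ 400] allI impI)
  fix n :: nat and \<theta> m :: real and f
  assume a: "is_LTF n \<theta> m f \<and> \<theta> \<ge> 2 * m \<and> m > 0"
  then obtain w where w: "\<forall>i<n. w i \<ge> 0" "m > 0" "\<forall>x\<in>cube n. m \<le> \<bar>ltf_form n w \<theta> x\<bar>"
    "\<forall>x\<in>cube n. f x = sgn01 (ltf_form n w \<theta> x)" unfolding is_LTF_def by blast
  define K where "K = nat \<lceil>\<theta>/(2*m)\<rceil>"
  have K1: "1 \<le> K"
  proof -
    have "1 \<le> \<theta>/(2*m)" using a by simp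
    then show ?thesis unfolding K_def by linarith
  qed
  obtain e where e: "K \<le> 2^e" "2^e < 2*K" using exists_e[OF K1] by blast
  have marg': "\<forall>x\<in>cube n. m \<le> \<bar>sumw n w x - \<theta>\<bar>" using w(3) by (simp add: ltf_form_sumw)
  interpret sk_setup n \<theta> m w e
  proof
    show "\<forall>i<n. 0 \<le> w i" by (rule w(1))
    show "0 < m" by (rule w(2))
    show "\<forall>x\<in>cube n. m \<le> \<bar>sumw n w x - \<theta>\<bar>" by (rule marg')
    show "2*m \<le> \<theta>" using a by simp
    show "nat \<lceil>\<theta>/(2*m)\<rceil> \<le> 2^e" using e(1) by (simp add: K_def)
  qed
  have KK: "K1 = K" by (simp add: K1_def K_def)
  have "sketchable n (1/3) f (K * (24*e + 105))"
    using sketch_ok[OF w(4)] k_eq KK by simp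
  then have R: "R_lin n (1/3) f \<le> K * (24*e + 105)" unfolding R_lin_def by (rule Least_le)
  define t where "t = \<theta>/m"
  have t2: "2 \<le> t" using a by (simp add: t_def field_simps)
  have Kt: "real K \<le> t"
  proof -
    have "0 \<le> \<theta>/(2*m)" using a by simp
    then have "real K = of_int \<lceil>\<theta>/(2*m)\<rceil>" unfolding K_def by simp
    then have "real K \<le> \<theta>/(2*m) + 1" by linarith
    also have "\<dots> = t/2 + 1" by (simp add: t_def)
    also have "\<dots> \<le> t" using t2 by simp
    finally show ?thesis .
  qed
  have lt: "1 \<le> log 2 t" using t2 by simp
  have "real e < log 2 (2 * t)"
  proof -
    have "real (2^e) < real (2*K)" using e(2) by (simp only: of_nat_less_iff)
    then have "(2::real)^e < 2 * real K" by simp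
    also have "\<dots> \<le> 2 * t" using Kt by simp
    finally have "(2::real)^e < 2*t" .
    then have "log 2 ((2::real)^e) < log 2 (2*t)" using t2 by (subst log_less_cancel_iff) auto
    then show ?thesis by simp
  qed
  also have "log 2 (2*t) = 1 + log 2 t" using t2 by (simp add: log_mult)
  finally have el: "real e < 1 + log 2 t" .
  have "real (R_lin n (1/3) f) \<le> real (K * (24*e + 105))" using R by (simp only: of_nat_le_iff)
  then have "real (R_lin n (1/3) f) \<le> real K * (24 * real e + 105)" by simp
  also have "\<dots> \<le> t * (24 * (1 + log 2 t) + 105)"
    using Kt el by (intro mult_mono) auto
  also have "\<dots> \<le> t * (153 * log 2 t)" using lt t2 by (intro mult_left_mono) auto
  also have "\<dots> = 153 * t * ln t / ln 2" by (simp add: log_def)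
  also have "\<dots> \<le> 400 * t * ln t"
  proof -
    define X where "X = t * ln t"
    have X0: "0 \<le> X" using t2 by (simp add: X_def)
    have "X * (1/2) \<le> X * ln 2" using ln2_ge X0 by (rule mult_left_mono)
    then have h: "153 * X \<le> 400 * X * ln 2" using X0 by linarith
    have l2: "0 < ln (2::real)" by simp
    have "153 * X / ln 2 \<le> 400 * X" using h l2 by (simp add: divide_le_eq)
    then show ?thesis by (simp add: X_def mult.assoc)
  qed
  finally show "real (R_lin n (1/3) f) \<le> 400 * (\<theta> / m) * ln (\<theta> / m)" by (simp add: t_def)
qed


end
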